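(* Let $\Lambda$ be a row-finite $k$-graph with no sources and $R$ a commutative ring with $1$. Let $(\alpha,\beta)\in\Sigma$ and $x\in\mathfrak{T}_\Lambda$. (a) If $x\notin F_{\alpha,\beta}$, then there exist $\mu,\nu\in\Lambda$ such that $x\in Z(\mu)\cap Z(\nu)$ and $s_\mu s_{\mu^*}s_\alpha s_{\beta^*}s_\nu s_{\nu^*}=0$ in ${\rm KP}_R(\Lambda)$. (b) If $x\in F_{\alpha,\beta}$, then there exists $\gamma\in\Lambda$ with $x\in Z(\alpha\gamma)\cap Z(\beta\gamma)$, $s_{\alpha\gamma}s_{(\alpha\gamma)^*}s_\alpha s_{\beta^*}s_{\beta\gamma}s_{(\beta\gamma)^*}=s_{\alpha\gamma}s_{(\beta\gamma)^*}$, and $(\alpha\gamma,\beta\gamma)$ a cycline pair.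
   Context: A $k$-graph is a countable category $\Lambda$ (vertices $\Lambda^0$, paths, maps $r,s$) with a degree functor $d:\Lambda\to\mathbb{N}^k$ satisfying unique factorization: if $d(\lambda)=m+n$ there are unique $\mu,\nu$ with $s(\mu)=r(\nu)$, $d(\mu)=m,d(\nu)=n$, $\lambda=\mu\nu$. $v\Lambda=\{\lambda:r(\lambda)=v\}$, $v\Lambda^n$ those of degree $n$; row-finite with no sources means each $v\Lambda^n$ is finite and nonempty. ${\rm KP}_R(\Lambda)$ is the universal $R$-algebra generated by $p_v$ ($v\in\Lambda^0$), $s_\lambda,s_{\lambda^*}$ ($d(\lambda)\ne0$) with relations (KP1) $p_v$ mutually orthogonal idempotents; (KP2) $s_\lambda s_\mu=s_{\lambda\mu}$, $s_{\mu^*}s_{\lambda^*}=s_{(\lambda\mu)^*}$, $p_{r(\lambda)}s_\lambda=s_\lambda=s_\lambda p_{s(\lambda)}$, $p_{s(\lambda)}s_{\lambda^*}=s_{\lambda^*}=s_{\lambda^*}p_{r(\lambda)}$ when $r(\mu)=s(\lambda)$; (KP3) $s_{\lambda^*}s_\mu=\delta_{\lambda,\mu}p_{s(\lambda)}$ when $d(\lambda)=d(\mu)$; (KP4) $p_v=\sum_{\lambda\in v\Lambda^n}s_\lambda s_{\lambda^*}$ for $n\ne0$. Convention $s_v=s_{v^*}=p_v$. A pair $(\alpha,\beta)$ with $s(\alpha)=s(\beta)$ is cycline if $s_{\alpha\gamma}s_{(\alpha\gamma)^*}=s_{\beta\gamma}s_{(\beta\gamma)^*}$ for all $\gamma\in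 s(\alpha)\Lambda$. Let $\Omega_k$ be the $k$-graph with objects $\mathbb{N}^k$, morphisms $\{(p,q):p\le q\}$, $r(p,q)=p$, $s(p,q)=q$, $(p,q)(q,t)=(p,t)$, $d(p,q)=q-p$. An infinite path is a degree-preserving functor $x:\Omega_k\to\Lambda$; $\Lambda^\infty$ is the set of infinite paths. For $\mu\in\Lambda$, $Z(\mu)=\{x\in\Lambda^\infty: x(0,d(\mu))=\mu\}$; these cylinder sets form a basis of compact open sets for a Hausdorff topology on $\Lambda^\infty$. For $p\in\mathbb{N}^k$, $\sigma^p:\Lambda^\infty\to\Lambda^\infty$ is $\sigma^p(x)(m,n)=x(m+p,n+p)$. Let $\Sigma=\{(\alpha,\beta)\in\Lambda\times\Lambda: s(\alpha)=s(\beta),\ \alpha\ne\beta\}$; for $(\alpha,\beta)\in\Sigma$ let $F_{\alpha,\beta}=\{x\in Z(\alpha)\cap Z(\beta): \sigma^{d(\alpha)}(x)=\sigma^{d(\beta)}(x)\}$. The set of regular paths is $\mathfrak{T}_\Lambda=\Lambda^\infty\setminus\bigcup_{(\alpha,\beta)\in\Sigma}\partial F_{\alpha,\beta}$, where $\partial$ denotes topological boundary. *)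

theory Defs
  imports "HOL-Analysis.Analysis" "HOL-Library.Function_Algebras"
begin

text \<open>Degrees live in N^k, represented as 'k => nat for a finite (nonempty) index type 'k;
  addition, zero, subtraction and the (pointwise) order are the pointwise ones.\<close>

record ('v,'a,'k) kgraph =
  Obj :: "'v set"
  Mor :: "'a set"
  rg  :: "'a \<Rightarrow> 'v"
  sr  :: "'a \<Rightarrow> 'v"
  idt :: "'v \<Rightarrow> 'a"
  cmp :: "'a \<Rightarrow> 'a \<Rightarrow> 'a"
  dg  :: "'a \<Rightarrow> 'k \<Rightarrow> nat"

definition kgraph :: "('v,'a,'k::finite) kgraph \<Rightarrow> bool" where
  "kgraph L \<longleftrightarrow>
     countable (Obj L) \<and> countable (Mor L) \<and>
     (\<forall>l\<in>Mor L. rg L l \<in> Obj L \<and> sr L l \<in> Obj L) \<and>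
     (\<forall>v\<in>Obj L. idt L v \<in> Mor L \<and> rg L (idt L v) = v \<and> sr L (idt L v) = v
                 \<and> dg L (idt L v) = 0) \<and>
     (\<forall>l\<in>Mor L. \<forall>m\<in>Mor L. sr L l = rg L m \<longrightarrow>
        cmp L l m \<in> Mor L \<and> rg L (cmp L l m) = rg L l \<and> sr L (cmp L l m) = sr L m
        \<and> dg L (cmp L l m) = dg L l + dg L m) \<and>
     (\<forall>l\<in>Mor L. cmp L (idt L (rg L l)) l = l \<and> cmp L l (idt L (sr L l)) = l) \<and>
     (\<forall>l\<in>Mor L. \<forall>m\<in>Mor L. \<forall>n\<in>Mor L. sr L l = rg L m \<longrightarrow> sr L m = rg L n \<longrightarrow>
        cmp L (cmp L l m) n = cmp L l (cmp L m n)) \<and>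
     (\<forall>l\<in>Mor L. \<forall>m n. dg L l = m + n \<longrightarrow>
        (\<exists>!p. fst p \<in> Mor L \<and> snd p \<in> Mor L \<and> sr L (fst p) = rg L (snd p)
              \<and> dg L (fst p) = m \<and> dg L (snd p) = n \<and> l = cmp L (fst p) (snd p)))"

definition vLn :: "('v,'a,'k) kgraph \<Rightarrow> 'v \<Rightarrow> ('k \<Rightarrow> nat) \<Rightarrow> 'a set" where
  "vLn L v n = {l \<in> Mor L. rg L l = v \<and> dg L l = n}"

definition row_finite_no_sources :: "('v,'a,'k) kgraph \<Rightarrow> bool" where
  "row_finite_no_sources L \<longleftrightarrow> (\<forall>v\<in>Obj L. \<forall>n. finite (vLn L v n) \<and> vLn L v n \<noteq> {})"

text \<open>An infinite path is a degree preserving functor Omega_k -> Lambda, given by its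
  values x p q on morphisms (p,q), p <= q; it is made extensional by setting the
  value to undefined when not p <= q.\<close>

type_synonym ('a,'k) ipath = "('k \<Rightarrow> nat) \<Rightarrow> ('k \<Rightarrow> nat) \<Rightarrow> 'a"

definition inf_paths :: "('v,'a,'k) kgraph \<Rightarrow> ('a,'k) ipath set" where
  "inf_paths L = {x.
     (\<forall>p q. p \<le> q \<longrightarrow> x p q \<in> Mor L \<and> dg L (x p q) = q - p) \<and>
     (\<forall>p. x p p = idt L (rg L (x p p))) \<and>
     (\<forall>p q t. p \<le> q \<longrightarrow> q \<le> t \<longrightarrow>
        sr L (x p q) = rg L (x q t) \<and> x p t = cmp L (x p q) (x q t)) \<and>
     (\<forall>p q. \<not> p \<le> q \<longrightarrow> x p q = undefined)}"

definition cyl :: "('v,'a,'k) kgraph \<Rightarrow> 'a \<Rightarrow> ('a,'k) ipath set" where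
  "cyl L \<mu> = {x \<in> inf_paths L. x 0 (dg L \<mu>) = \<mu>}"

definition pshift :: "('a,'k) ipath \<Rightarrow> ('k \<Rightarrow> nat) \<Rightarrow> ('a,'k) ipath" where
  "pshift x p = (\<lambda>m n. if m \<le> n then x (m + p) (n + p) else undefined)"

definition path_top :: "('v,'a,'k) kgraph \<Rightarrow> ('a,'k) ipath topology" where
  "path_top L = topology_generated_by {cyl L \<mu> | \<mu>. \<mu> \<in> Mor L}"

definition KSigma :: "('v,'a,'k) kgraph \<Rightarrow> ('a \<times> 'a) set" where
  "KSigma L = {(\<alpha>,\<beta>). \<alpha> \<in> Mor L \<and> \<beta> \<in> Mor L \<and> sr L \<alpha> = sr L \<beta> \<and> \<alpha> \<noteq> \<beta>}"

definition Fset :: "('v,'a,'k) kgraph \<Rightarrow> 'a \<Rightarrow> 'a \<Rightarrow> ('a,'k) ipath set" where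
  "Fset L \<alpha> \<beta> = {x \<in> cyl L \<alpha> \<inter> cyl L \<beta>. pshift x (dg L \<alpha>) = pshift x (dg L \<beta>)}"

definition regular_paths :: "('v,'a,'k) kgraph \<Rightarrow> ('a,'k) ipath set" where
  "regular_paths L = inf_paths L - (\<Union>(\<alpha>,\<beta>)\<in>KSigma L. path_top L frontier_of Fset L \<alpha> \<beta>)"

text \<open>KP_R(Lambda) is the quotient of the free (noncommutative) R-algebra on the generators
  by the two-sided ideal generated by the relations (KP1)-(KP4). We realise the free
  algebra as finitely supported functions from words in the generators to R, and
  express equality in KP_R(Lambda) as membership of the difference in that ideal.\<close>

datatype ('v,'a) kpgen = GP 'v | GS 'a | GSs 'a

type_synonym ('v,'a,'r) fa = "('v,'a) kpgen list \<Rightarrow> 'r"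

definition fa_mon :: "('v,'a) kpgen list \<Rightarrow> ('v,'a,'r::comm_ring_1) fa" where
  "fa_mon w = (\<lambda>u. if u = w then 1 else 0)"

definition fa_zero :: "('v,'a,'r::comm_ring_1) fa" where
  "fa_zero = (\<lambda>u. 0)"

definition fa_add :: "('v,'a,'r::comm_ring_1) fa \<Rightarrow> ('v,'a,'r) fa \<Rightarrow> ('v,'a,'r) fa" where
  "fa_add f g = (\<lambda>u. f u + g u)"

definition fa_diff :: "('v,'a,'r::comm_ring_1) fa \<Rightarrow> ('v,'a,'r) fa \<Rightarrow> ('v,'a,'r) fa" where
  "fa_diff f g = (\<lambda>u. f u - g u)"

definition fa_sum :: "'b set \<Rightarrow> ('b \<Rightarrow> ('v,'a,'r::comm_ring_1) fa) \<Rightarrow> ('v,'a,'r) fa" where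
  "fa_sum A F = (\<lambda>u. \<Sum>b\<in>A. F b u)"

definition fa_mul :: "('v,'a,'r::comm_ring_1) fa \<Rightarrow> ('v,'a,'r) fa \<Rightarrow> ('v,'a,'r) fa" where
  "fa_mul f g = (\<lambda>w. \<Sum>i\<le>length w. f (take i w) * g (drop i w))"

definition fa_prod :: "('v,'a,'r::comm_ring_1) fa list \<Rightarrow> ('v,'a,'r) fa" where
  "fa_prod xs = foldr fa_mul xs (fa_mon [])"

definition fa_fin :: "('v,'a,'r::comm_ring_1) fa \<Rightarrow> bool" where
  "fa_fin f \<longleftrightarrow> finite {w. f w \<noteq> 0}"

text \<open>Generators p_v, s_lambda, s_lambda*, with the convention s_v = s_v* = p_v
  for paths of degree 0 (which are the vertices).\<close>

definition kp_p :: "('v,'a,'k) kgraph \<Rightarrow> 'v \<Rightarrow> ('v,'a,'r::comm_ring_1) fa" where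
  "kp_p L v = fa_mon [GP v]"

definition kp_s :: "('v,'a,'k) kgraph \<Rightarrow> 'a \<Rightarrow> ('v,'a,'r::comm_ring_1) fa" where
  "kp_s L l = (if dg L l = 0 then fa_mon [GP (rg L l)] else fa_mon [GS l])"

definition kp_ss :: "('v,'a,'k) kgraph \<Rightarrow> 'a \<Rightarrow> ('v,'a,'r::comm_ring_1) fa" where
  "kp_ss L l = (if dg L l = 0 then fa_mon [GP (rg L l)] else fa_mon [GSs l])"

definition kp_rels :: "('v,'a,'k) kgraph \<Rightarrow> ('v,'a,'r::comm_ring_1) fa set" where
  "kp_rels L =
     \<comment> \<open>(KP1)\<close>
     {fa_diff (fa_mul (kp_p L v) (kp_p L w)) (if v = w then kp_p L v else fa_zero)
       | v w. v \<in> Obj L \<and> w \<in> Obj L}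
   \<union> \<comment> \<open>(KP2)\<close>
     {fa_diff (fa_mul (kp_s L l) (kp_s L m)) (kp_s L (cmp L l m))
       | l m. l \<in> Mor L \<and> m \<in> Mor L \<and> rg L m = sr L l \<and> dg L l \<noteq> 0 \<and> dg L m \<noteq> 0}
   \<union> {fa_diff (fa_mul (kp_ss L m) (kp_ss L l)) (kp_ss L (cmp L l m))
       | l m. l \<in> Mor L \<and> m \<in> Mor L \<and> rg L m = sr L l \<and> dg L l \<noteq> 0 \<and> dg L m \<noteq> 0}
   \<union> {fa_diff (fa_mul (kp_p L (rg L l)) (kp_s L l)) (kp_s L l) | l. l \<in> Mor L \<and> dg L l \<noteq> 0}
   \<union> {fa_diff (fa_mul (kp_s L l) (kp_p L (sr L l))) (kp_s L l) | l. l \<in> Mor L \<and> dg L l \<noteq> 0}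
   \<union> {fa_diff (fa_mul (kp_p L (sr L l)) (kp_ss L l)) (kp_ss L l) | l. l \<in> Mor L \<and> dg L l \<noteq> 0}
   \<union> {fa_diff (fa_mul (kp_ss L l) (kp_p L (rg L l))) (kp_ss L l) | l. l \<in> Mor L \<and> dg L l \<noteq> 0}
   \<union> \<comment> \<open>(KP3)\<close>
     {fa_diff (fa_mul (kp_ss L l) (kp_s L m)) (if l = m then kp_p L (sr L l) else fa_zero)
       | l m. l \<in> Mor L \<and> m \<in> Mor L \<and> dg L l = dg L m \<and> dg L l \<noteq> 0}
   \<union> \<comment> \<open>(KP4)\<close>
     {fa_diff (kp_p L v) (fa_sum (vLn L v n) (\<lambda>l. fa_mul (kp_s L l) (kp_ss L l)))
       | v n. v \<in> Obj L \<and> n \<noteq> 0}"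

inductive_set kp_ideal :: "('v,'a,'k) kgraph \<Rightarrow> ('v,'a,'r::comm_ring_1) fa set"
  for L :: "('v,'a,'k) kgraph" where
  kp_ideal_zero: "fa_zero \<in> kp_ideal L"
| kp_ideal_gen: "r \<in> kp_rels L \<Longrightarrow> fa_fin a \<Longrightarrow> fa_fin b \<Longrightarrow> fa_mul (fa_mul a r) b \<in> kp_ideal L"
| kp_ideal_add: "x \<in> kp_ideal L \<Longrightarrow> y \<in> kp_ideal L \<Longrightarrow> fa_add x y \<in> kp_ideal L"

definition kp_eq :: "('v,'a,'k) kgraph \<Rightarrow> ('v,'a,'r::comm_ring_1) fa \<Rightarrow> ('v,'a,'r) fa \<Rightarrow> bool" where
  "kp_eq L a b \<longleftrightarrow> fa_diff a b \<in> kp_ideal L"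

definition cycline :: "('v,'a,'k) kgraph \<Rightarrow> 'r::comm_ring_1 itself \<Rightarrow> 'a \<Rightarrow> 'a \<Rightarrow> bool" where
  "cycline L R \<alpha> \<beta> \<longleftrightarrow> sr L \<alpha> = sr L \<beta> \<and>
     (\<forall>\<gamma>\<in>Mor L. rg L \<gamma> = sr L \<alpha> \<longrightarrow>
        kp_eq L (fa_mul (kp_s L (cmp L \<alpha> \<gamma>)) (kp_ss L (cmp L \<alpha> \<gamma>)) :: ('v,'a,'r) fa)
                (fa_mul (kp_s L (cmp L \<beta> \<gamma>)) (kp_ss L (cmp L \<beta> \<gamma>))))"

end

theory Submission
  imports Defs
begin

lemma dle_add: "(a::'k\<Rightarrow>nat) \<le> a + b" by (simp add: le_fun_def)
lemma d_add_diff: "(a::'k\<Rightarrow>nat) \<le> b \<Longrightarrow> a + (b - a) = b"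
  by (simp add: le_fun_def fun_eq_iff)
lemma d_diff_add: "(a::'k\<Rightarrow>nat) \<le> b \<Longrightarrow> (b - a) + a = b"
  by (simp add: le_fun_def fun_eq_iff)

section \<open>k-graph basics\<close>

locale kgl = fixes L :: "('v,'a,'k::finite) kgraph" assumes KG: "kgraph L"
begin

lemma kg_mor: "l \<in> Mor L \<Longrightarrow> rg L l \<in> Obj L \<and> sr L l \<in> Obj L"
  using KG unfolding kgraph_def by blast
lemma kg_idt: "v \<in> Obj L \<Longrightarrow> idt L v \<in> Mor L \<and> rg L (idt L v) = v \<and> sr L (idt L v) = v \<and> dg L (idt L v) = 0"
  using KG unfolding kgraph_def by blast
lemma kg_cmp: "l \<in> Mor L \<Longrightarrow> m \<in> Mor L \<Longrightarrow> sr L l = rg L m \<Longrightarrow>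
   cmp L l m \<in> Mor L \<and> rg L (cmp L l m) = rg L l \<and> sr L (cmp L l m) = sr L m \<and> dg L (cmp L l m) = dg L l + dg L m"
  using KG unfolding kgraph_def by blast
lemma kg_idl: "l \<in> Mor L \<Longrightarrow> cmp L (idt L (rg L l)) l = l"
  using KG unfolding kgraph_def by blast
lemma kg_idr: "l \<in> Mor L \<Longrightarrow> cmp L l (idt L (sr L l)) = l"
  using KG unfolding kgraph_def by blast
lemma kg_assoc: "l \<in> Mor L \<Longrightarrow> m \<in> Mor L \<Longrightarrow> n \<in> Mor L \<Longrightarrow> sr L l = rg L m \<Longrightarrow> sr L m = rg L n \<Longrightarrow>
        cmp L (cmp L l m) n = cmp L l (cmp L m n)"
  using KG unfolding kgraph_def by blast
lemma kg_uf: "l \<in> Mor L \<Longrightarrow> dg L l = m + n \<Longrightarrow>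
        (\<exists>!p. fst p \<in> Mor L \<and> snd p \<in> Mor L \<and> sr L (fst p) = rg L (snd p)
              \<and> dg L (fst p) = m \<and> dg L (snd p) = n \<and> l = cmp L (fst p) (snd p))"
  using KG unfolding kgraph_def by blast

lemma kg_fact_eq:
  assumes "a \<in> Mor L" "b \<in> Mor L" "a' \<in> Mor L" "b' \<in> Mor L" "sr L a = rg L b" "sr L a' = rg L b'"
    "cmp L a b = cmp L a' b'" "dg L a = dg L a'"
  shows "a = a' \<and> b = b'"
proof -
  have c1: "cmp L a b \<in> Mor L" "dg L (cmp L a b) = dg L a + dg L b" using kg_cmp[OF assms(1,2,5)] by auto
  have c2: "dg L (cmp L a' b') = dg L a' + dg L b'" using kg_cmp[OF assms(3,4,6)] by auto
  have "dg L a + dg L b = dg L a + dg L b'" using assms(7,8) c1(2) c2 by metis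
  then have db: "dg L b = dg L b'" by simp
  from kg_uf[OF c1] have "\<exists>!p. fst p \<in> Mor L \<and> snd p \<in> Mor L \<and> sr L (fst p) = rg L (snd p)
              \<and> dg L (fst p) = dg L a \<and> dg L (snd p) = dg L b \<and> cmp L a b = cmp L (fst p) (snd p)" .
  then have "(a,b) = (a',b')" using assms db c1 by (smt (verit) fst_conv snd_conv)
  then show ?thesis by simp
qed

lemma kg_deg0: assumes "l \<in> Mor L" "dg L l = 0" shows "l = idt L (rg L l)"
proof -
  have "dg L l = 0 + 0" using assms by simp
  from kg_uf[OF assms(1) this] obtain p where "\<forall>q. (fst q \<in> Mor L \<and> snd q \<in> Mor L \<and> sr L (fst q) = rg L (snd q)
              \<and> dg L (fst q) = 0 \<and> dg L (snd q) = 0 \<and> l = cmp L (fst q) (snd q)) \<longleftrightarrow> q = p"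
    by (metis (no_types, lifting))
  moreover have "(idt L (rg L l), l) = p" using calculation kg_idt[of "rg L l"] kg_mor[OF assms(1)] assms kg_idl[OF assms(1)]
    by (metis fst_conv snd_conv)
  moreover have "(l, idt L (sr L l)) = p" using calculation kg_idt[of "sr L l"] kg_mor[OF assms(1)] assms kg_idr[OF assms(1)]
    by (metis fst_conv snd_conv)
  ultimately show ?thesis by auto
qed

lemma kg_split: assumes "l \<in> Mor L" "m \<le> dg L l"
  shows "\<exists>a b. a \<in> Mor L \<and> b \<in> Mor L \<and> sr L a = rg L b \<and> dg L a = m \<and> dg L b = dg L l - m \<and> l = cmp L a b"
proof -
  have "dg L l = m + (dg L l - m)" using d_add_diff[OF assms(2)] by simp
  from kg_uf[OF assms(1) this] show ?thesis by blast
qed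

end

definition splitp where
  "splitp L l m pr \<longleftrightarrow> fst pr \<in> Mor L \<and> snd pr \<in> Mor L \<and> sr L (fst pr) = rg L (snd pr) \<and> dg L (fst pr) = m
     \<and> l = cmp L (fst pr) (snd pr)"
definition fac where "fac L l m = (SOME pr. splitp L l m pr)"
definition seg where "seg L l p q = fst (fac L (snd (fac L l p)) (q - p))"

context kgl begin

lemma fac_spec: assumes "l \<in> Mor L" "m \<le> dg L l"
  shows "fst (fac L l m) \<in> Mor L \<and> snd (fac L l m) \<in> Mor L \<and> sr L (fst (fac L l m)) = rg L (snd (fac L l m))
     \<and> dg L (fst (fac L l m)) = m \<and> dg L (snd (fac L l m)) = dg L l - m \<and> l = cmp L (fst (fac L l m)) (snd (fac L l m))"
proof -
  from kg_split[OF assms] obtain a b where ab: "a \<in> Mor L \<and> b \<in> Mor L \<and> sr L a = rg L b \<and> dg L a = m \<and> dg L b = dg L l - m \<and> l = cmp L a b" by blast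
  then have "splitp L l m (a,b)" unfolding splitp_def by simp
  then have sp: "splitp L l m (fac L l m)" unfolding fac_def by (rule someI)
  then have F: "fst (fac L l m) = a \<and> snd (fac L l m) = b" using kg_fact_eq[of a b "fst (fac L l m)" "snd (fac L l m)"] ab
    unfolding splitp_def by metis
  show ?thesis using ab F by simp
qed

lemma fac_eq: assumes "a \<in> Mor L" "b \<in> Mor L" "sr L a = rg L b"
  shows "fac L (cmp L a b) (dg L a) = (a, b)"
proof -
  have c: "cmp L a b \<in> Mor L" "dg L (cmp L a b) = dg L a + dg L b" using kg_cmp[OF assms] by auto
  then have "dg L a \<le> dg L (cmp L a b)" by (simp add: dle_add)
  from fac_spec[OF c(1) this] have "fst (fac L (cmp L a b) (dg L a)) = a \<and> snd (fac L (cmp L a b) (dg L a)) = b"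
    using kg_fact_eq[of a b "fst (fac L (cmp L a b) (dg L a))" "snd (fac L (cmp L a b) (dg L a))"] assms by metis
  then show ?thesis by (metis prod.collapse)
qed

lemma seg_mor: assumes "l \<in> Mor L" "p \<le> q" "q \<le> dg L l"
  shows "seg L l p q \<in> Mor L \<and> dg L (seg L l p q) = q - p"
proof -
  have pl: "p \<le> dg L l" using assms order_trans by blast
  note F = fac_spec[OF assms(1) pl]
  have "q - p \<le> dg L l - p" using assms by (auto simp: le_fun_def intro: diff_le_mono)
  then have "q - p \<le> dg L (snd (fac L l p))" using F by simp
  from fac_spec[OF conjunct1[OF conjunct2[OF F]] this] show ?thesis unfolding seg_def by simp
qed

lemma seg_ext: assumes "l \<in> Mor L" "e \<in> Mor L" "sr L l = rg L e" "p \<le> q" "q \<le> dg L l"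
  shows "seg L (cmp L l e) p q = seg L l p q"
proof -
  have pl: "p \<le> dg L l" using assms order_trans by blast
  note F = fac_spec[OF assms(1) pl]
  define a b where "a = fst (fac L l p)" and "b = snd (fac L l p)"
  have ab: "a \<in> Mor L" "b \<in> Mor L" "sr L a = rg L b" "dg L a = p" "dg L b = dg L l - p" "l = cmp L a b"
    using F a_def b_def by auto
  have srb: "sr L b = sr L l" using ab kg_cmp by metis
  have be: "cmp L b e \<in> Mor L" "rg L (cmp L b e) = rg L b" using kg_cmp[OF ab(2) assms(2)] srb assms(3) by auto
  have "cmp L l e = cmp L a (cmp L b e)" using ab kg_assoc assms srb by metis
  then have f1: "fac L (cmp L l e) p = (a, cmp L b e)" using fac_eq[OF ab(1) be(1)] ab be by simp
  have qb: "q - p \<le> dg L b" using assms ab by (auto simp: le_fun_def intro: diff_le_mono)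
  note G = fac_spec[OF ab(2) qb]
  define c d where "c = fst (fac L b (q-p))" and "d = snd (fac L b (q-p))"
  have cd: "c \<in> Mor L" "d \<in> Mor L" "sr L c = rg L d" "dg L c = q - p" "b = cmp L c d"
    using G c_def d_def by auto
  have srd: "sr L d = sr L b" using cd kg_cmp by metis
  have de: "cmp L d e \<in> Mor L" "rg L (cmp L d e) = rg L d" using kg_cmp[OF cd(2) assms(2)] srd srb assms(3) by auto
  have "cmp L b e = cmp L c (cmp L d e)" using cd kg_assoc assms srd srb by metis
  then have "fac L (cmp L b e) (q - p) = (c, cmp L d e)" using fac_eq[OF cd(1) de(1)] cd de by simp
  then show ?thesis unfolding seg_def using f1 c_def b_def by simp
qed

lemma seg_cmp: assumes "l \<in> Mor L" "p \<le> q" "q \<le> t" "t \<le> dg L l"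
  shows "sr L (seg L l p q) = rg L (seg L l q t) \<and> seg L l p t = cmp L (seg L l p q) (seg L l q t)"
proof -
  have pl: "p \<le> dg L l" using assms order_trans by blast
  note F = fac_spec[OF assms(1) pl]
  define a b where "a = fst (fac L l p)" and "b = snd (fac L l p)"
  have ab: "a \<in> Mor L" "b \<in> Mor L" "sr L a = rg L b" "dg L a = p" "dg L b = dg L l - p" "l = cmp L a b"
    using F a_def b_def by auto
  have ql: "q \<le> dg L l" using assms order_trans by blast
  have qb: "q - p \<le> dg L b" using ql ab(5) by (auto simp: le_fun_def intro: diff_le_mono)
  note G = fac_spec[OF ab(2) qb]
  define c e where "c = fst (fac L b (q-p))" and "e = snd (fac L b (q-p))"
  have ce: "c \<in> Mor L" "e \<in> Mor L" "sr L c = rg L e" "dg L c = q - p" "dg L e = dg L b - (q - p)" "b = cmp L c e"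
    using G c_def e_def by auto
  have s1: "seg L l p q = c" unfolding seg_def using a_def b_def c_def by simp
  have rgc: "rg L c = rg L b" using ce kg_cmp by metis
  have ac: "cmp L a c \<in> Mor L" "sr L (cmp L a c) = sr L c" "dg L (cmp L a c) = q"
    using kg_cmp[OF ab(1) ce(1)] ab ce rgc assms(2) by (auto simp: d_add_diff)
  have "l = cmp L (cmp L a c) e" using ab ce kg_assoc rgc by metis
  then have "fac L l q = (cmp L a c, e)" using fac_eq[OF ac(1) ce(2)] ac ce by simp
  then have s2: "seg L l q t = fst (fac L e (t - q))" unfolding seg_def by simp
  have te: "t - q \<le> dg L e" using assms ab ce by (auto simp: le_fun_def intro: diff_le_mono)
  note H = fac_spec[OF ce(2) te]
  define f g where "f = fst (fac L e (t-q))" and "g = snd (fac L e (t-q))"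
  have fg: "f \<in> Mor L" "g \<in> Mor L" "sr L f = rg L g" "dg L f = t - q" "e = cmp L f g"
    using H f_def g_def by auto
  have rgf: "rg L f = rg L e" using fg kg_cmp by metis
  have cf: "cmp L c f \<in> Mor L" "dg L (cmp L c f) = t - p" "sr L (cmp L c f) = sr L f"
    using kg_cmp[OF ce(1) fg(1)] ce fg rgf assms by (auto simp: le_fun_def fun_eq_iff)
  have "b = cmp L (cmp L c f) g" using ce fg kg_assoc rgf by metis
  then have "fac L b (t - p) = (cmp L c f, g)" using fac_eq[OF cf(1) fg(2)] cf fg by simp
  then have "seg L l p t = cmp L c f" unfolding seg_def using b_def by simp
  then show ?thesis using s1 s2 f_def ce rgf by simp
qed

lemma seg_0: assumes "l \<in> Mor L" "e \<in> Mor L" "sr L l = rg L e"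
  shows "seg L (cmp L l e) 0 (dg L l) = l"
proof -
  have le: "cmp L l e \<in> Mor L" "rg L (cmp L l e) = rg L l" using kg_cmp[OF assms] by auto
  have i: "idt L (rg L l) \<in> Mor L" "sr L (idt L (rg L l)) = rg L l" "dg L (idt L (rg L l)) = 0"
    using kg_idt kg_mor assms(1) by auto
  have "fac L (cmp L l e) 0 = (idt L (rg L l), cmp L l e)"
    using fac_eq[OF i(1) le(1)] i le kg_idl[OF le(1)] by simp
  then show ?thesis unfolding seg_def using fac_eq[OF assms] by simp
qed

end

context kgl begin

lemma ip_mor: "y \<in> inf_paths L \<Longrightarrow> p \<le> q \<Longrightarrow> y p q \<in> Mor L \<and> dg L (y p q) = q - p"
  unfolding inf_paths_def by blast
lemma ip_cmp: "y \<in> inf_paths L \<Longrightarrow> p \<le> q \<Longrightarrow> q \<le> t \<Longrightarrow> sr L (y p q) = rg L (y q t) \<and> y p t = cmp L (y p q) (y q t)"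
  unfolding inf_paths_def by blast
lemma ip_cyl: "y \<in> inf_paths L \<Longrightarrow> y \<in> cyl L (y 0 n)"
  unfolding cyl_def using ip_mor[of y 0 n] by (simp add: le_fun_def)

lemma cyl_mor: "y \<in> cyl L l \<Longrightarrow> l = y 0 (dg L l) \<and> y \<in> inf_paths L"
  unfolding cyl_def by auto

lemma cyl_pre: assumes "y \<in> cyl L (cmp L a b)" "a \<in> Mor L" "b \<in> Mor L" "sr L a = rg L b"
  shows "y \<in> cyl L a \<and> y (dg L a) (dg L a + dg L b) = b"
proof -
  have c: "dg L (cmp L a b) = dg L a + dg L b" using kg_cmp[OF assms(2-4)] by auto
  have y: "y \<in> inf_paths L" "y 0 (dg L a + dg L b) = cmp L a b" using assms(1) c unfolding cyl_def by auto
  have le: "0 \<le> dg L a" "dg L a \<le> dg L a + dg L b" by (auto simp: le_fun_def)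
  note Y = ip_cmp[OF y(1) le]
  have m1: "y 0 (dg L a) \<in> Mor L" "dg L (y 0 (dg L a)) = dg L a" using ip_mor[OF y(1) le(1)] by auto
  have m2: "y (dg L a) (dg L a + dg L b) \<in> Mor L" using ip_mor[OF y(1) le(2)] by auto
  have "y 0 (dg L a) = a \<and> y (dg L a) (dg L a + dg L b) = b"
    using kg_fact_eq[OF m1(1) m2 assms(2,3)] Y y(2) m1(2) assms(4) by metis
  then show ?thesis using y unfolding cyl_def by auto
qed

lemma cyl_mono: assumes "x \<in> inf_paths L" "y \<in> cyl L (x 0 n)" "m \<le> n"
  shows "y 0 m = x 0 m"
proof -
  have le: "0 \<le> m" by (simp add: le_fun_def)
  note X = ip_cmp[OF assms(1) le assms(3)]
  have "x 0 m \<in> Mor L" "x m n \<in> Mor L" using ip_mor assms(1,3) le by auto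
  from cyl_pre[of y "x 0 m" "x m n"] show ?thesis using X assms ip_mor[OF assms(1) le] \<open>x 0 m \<in> Mor L\<close> \<open>x m n \<in> Mor L\<close>
    unfolding cyl_def by auto
qed

end

locale kgr = kgl + assumes RF: "row_finite_no_sources L"
begin

lemma path_exists: assumes "r \<in> Mor L" shows "\<exists>y \<in> inf_paths L. y 0 (dg L r) = r"
proof -
  define one :: "'c \<Rightarrow> nat" where "one = (\<lambda>_. 1)"
  define ext where "ext l = cmp L l (SOME e. e \<in> vLn L (sr L l) one)" for l
  have ext: "ext l \<in> Mor L \<and> dg L (ext l) = dg L l + one \<and> (\<exists>e \<in> Mor L. rg L e = sr L l \<and> ext l = cmp L l e)"
    if "l \<in> Mor L" for l
  proof -
    have "sr L l \<in> Obj L" using kg_mor that by auto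
    then have "vLn L (sr L l) one \<noteq> {}" using RF unfolding row_finite_no_sources_def by auto
    then have "(SOME e. e \<in> vLn L (sr L l) one) \<in> vLn L (sr L l) one" by (simp add: some_in_eq)
    then obtain e where e: "e \<in> Mor L" "rg L e = sr L l" "dg L e = one" "ext l = cmp L l e"
      unfolding ext_def vLn_def by blast
    note kg_cmp[OF that e(1) e(2)[symmetric]]
    then show ?thesis using e by metis
  qed
  define lam where "lam j = (ext ^^ j) r" for j
  have lam: "lam j \<in> Mor L \<and> dg L (lam j) = dg L r + (\<lambda>_. j)" for j
  proof (induction j)
    case 0 then show ?case using assms by (simp add: lam_def fun_eq_iff)
  next
    case (Suc j)
    have "lam (Suc j) = ext (lam j)" unfolding lam_def by simp
    then show ?case using ext[of "lam j"] Suc by (simp add: one_def fun_eq_iff)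
  qed
  have lamext: "\<exists>e \<in> Mor L. rg L e = sr L (lam j) \<and> lam j' = cmp L (lam j) e" if "j \<le> j'" for j j'
    using that
  proof (induction j' rule: dec_induct)
    case base
    have m: "lam j \<in> Mor L" using lam by blast
    have o: "sr L (lam j) \<in> Obj L" using kg_mor[OF m] by blast
    show ?case using kg_idt[OF o] kg_idr[OF m] by auto
  next
    case (step n)
    then obtain e where e: "e \<in> Mor L" "rg L e = sr L (lam j)" "lam n = cmp L (lam j) e" by blast
    obtain e2 where e2: "e2 \<in> Mor L" "rg L e2 = sr L (lam n)" "ext (lam n) = cmp L (lam n) e2" using ext lam by blast
    have sn: "sr L (lam n) = sr L e" using e kg_cmp lam by metis
    have "lam (Suc n) = ext (lam n)" unfolding lam_def by simp
    also have "\<dots> = cmp L (lam j) (cmp L e e2)" using e e2 sn kg_assoc[of "lam j" e e2] lam[of j] by simp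
    finally show ?case using kg_cmp[OF e(1) e2(1)] e e2 sn by auto
  qed
  define J where "J q = (\<Sum>i\<in>UNIV. q i)" for q :: "'c \<Rightarrow> nat"
  have qJ: "q \<le> dg L (lam (J q))" for q
  proof -
    have "q i \<le> J q" for i unfolding J_def by (rule member_le_sum) auto
    then show ?thesis using lam[of "J q"] by (simp add: le_fun_def trans_le_add2)
  qed
  have Jmono: "q \<le> t \<Longrightarrow> J q \<le> J t" for q t unfolding J_def le_fun_def by (intro sum_mono) auto
  have cons: "seg L (lam j') p q = seg L (lam j) p q" if "j \<le> j'" "p \<le> q" "q \<le> dg L (lam j)" for j j' p q
  proof -
    obtain e where "e \<in> Mor L" "rg L e = sr L (lam j)" "lam j' = cmp L (lam j) e" using lamext[OF \<open>j \<le> j'\<close>] by blast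
    then show ?thesis using seg_ext[of "lam j" e p q] lam[of j] that by simp
  qed
  define y where "y p q = (if p \<le> q then seg L (lam (J q)) p q else undefined)" for p q
  have Y1: "y p q \<in> Mor L \<and> dg L (y p q) = q - p" if "p \<le> q" for p q
    unfolding y_def using seg_mor[of "lam (J q)" p q] lam[of "J q"] that qJ[of q] by simp
  have Y3: "sr L (y p q) = rg L (y q t) \<and> y p t = cmp L (y p q) (y q t)" if "p \<le> q" "q \<le> t" for p q t
  proof -
    have pt: "p \<le> t" using that order_trans by blast
    have "y p q = seg L (lam (J t)) p q" unfolding y_def using that cons[OF Jmono[OF that(2)] that(1) qJ] by simp
    moreover have "y q t = seg L (lam (J t)) q t" "y p t = seg L (lam (J t)) p t" unfolding y_def using that pt by auto
    ultimately show ?thesis using seg_cmp[of "lam (J t)" p q t] lam[of "J t"] that qJ[of t] by simp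
  qed
  have Y2: "y p p = idt L (rg L (y p p))" for p using Y1[of p p] kg_deg0[of "y p p"] by simp
  have Y4: "\<not> p \<le> q \<Longrightarrow> y p q = undefined" for p q by (simp add: y_def)
  have yin: "y \<in> inf_paths L" unfolding inf_paths_def using Y1 Y2 Y3 Y4 by blast
  have "y 0 (dg L r) = r"
  proof -
    obtain e where "e \<in> Mor L" "rg L e = sr L (lam 0)" "lam (J (dg L r)) = cmp L (lam 0) e" using lamext[of 0 "J (dg L r)"] by auto
    moreover have "lam 0 = r" unfolding lam_def by simp
    moreover have "0 \<le> dg L r" by (simp add: le_fun_def)
    ultimately show ?thesis unfolding y_def using seg_0[of r e] assms by simp
  qed
  then show ?thesis using yin by blast
qed

end

lemma fm_Nil: "fa_mul f g [] = f [] * g []"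
  unfolding fa_mul_def by simp

lemma fm_Cons: "fa_mul f g (x#w) = f [] * g (x#w) + fa_mul (\<lambda>u. f (x#u)) g w"
  unfolding fa_mul_def by (simp add: sum.atMost_Suc_shift del: sum.atMost_Suc)

lemma fm_ldist: "fa_mul (\<lambda>u. c * f u + h u) g w = c * fa_mul f g w + fa_mul h g w"
  unfolding fa_mul_def by (simp add: algebra_simps sum.distrib sum_distrib_left)

lemma fm_assoc_pt: "fa_mul (fa_mul f g) h w = fa_mul f (fa_mul g h) w"
proof (induction w arbitrary: f)
  case Nil
  then show ?case by (simp add: fm_Nil)
next
  case (Cons x w)
  have e: "(\<lambda>u. fa_mul f g (x#u)) = (\<lambda>u. f [] * g (x#u) + fa_mul (\<lambda>u. f (x#u)) g u)"
    by (simp add: fm_Cons)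
  have "fa_mul (fa_mul f g) h (x#w) = fa_mul f g [] * h (x#w) + fa_mul (\<lambda>u. fa_mul f g (x#u)) h w"
    by (simp add: fm_Cons)
  also have "\<dots> = f [] * g [] * h (x#w) + (f [] * fa_mul (\<lambda>u. g (x#u)) h w + fa_mul (fa_mul (\<lambda>u. f (x#u)) g) h w)"
    unfolding e fm_ldist by (simp add: fm_Nil)
  also have "\<dots> = f [] * g [] * h (x#w) + (f [] * fa_mul (\<lambda>u. g (x#u)) h w + fa_mul (\<lambda>u. f (x#u)) (fa_mul g h) w)"
    using Cons by simp
  also have "\<dots> = fa_mul f (fa_mul g h) (x#w)"
    by (simp add: fm_Cons algebra_simps)
  finally show ?case .
qed

lemma fm_assoc: "fa_mul (fa_mul f g) h = fa_mul f (fa_mul g h)"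
  using fm_assoc_pt by blast

lemma fm_zero_l_pt: "fa_mul (\<lambda>_. 0) f w = 0" unfolding fa_mul_def by simp
lemma fm_zero_l: "fa_mul (\<lambda>_. 0) f = (\<lambda>_. 0)" unfolding fa_mul_def by simp
lemma fm_zero_r: "fa_mul f (\<lambda>_. 0) = (\<lambda>_. 0)" unfolding fa_mul_def by simp
lemma fm_fzero_l: "fa_mul fa_zero f = fa_zero" unfolding fa_mul_def fa_zero_def by simp
lemma fm_fzero_r: "fa_mul f fa_zero = fa_zero" unfolding fa_mul_def fa_zero_def by simp

lemma fm_unit_l_pt: "fa_mul (fa_mon []) f w = f w"
proof (cases w)
  case Nil then show ?thesis by (simp add: fm_Nil fa_mon_def)
next
  case (Cons x w')
  have "(\<lambda>u. fa_mon [] (x # u)) = (\<lambda>_. 0)" by (simp add: fa_mon_def)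
  then show ?thesis using Cons by (simp add: fm_Cons fm_zero_l_pt fa_mon_def)
qed
lemma fm_unit_l: "fa_mul (fa_mon []) f = f" using fm_unit_l_pt by blast

lemma fm_unit_r_pt: "fa_mul f (fa_mon []) w = f w"
proof (induction w arbitrary: f)
  case Nil then show ?case by (simp add: fm_Nil fa_mon_def)
next
  case (Cons x w) then show ?case by (simp add: fm_Cons) (simp add: fa_mon_def)
qed
lemma fm_unit_r: "fa_mul f (fa_mon []) = f" using fm_unit_r_pt by blast

lemma fm_add_l: "fa_mul (fa_add a b) c = fa_add (fa_mul a c) (fa_mul b c)"
  unfolding fa_mul_def fa_add_def by (simp add: algebra_simps sum.distrib)
lemma fm_add_r: "fa_mul c (fa_add a b) = fa_add (fa_mul c a) (fa_mul c b)"
  unfolding fa_mul_def fa_add_def by (simp add: algebra_simps sum.distrib)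
lemma fm_diff_l: "fa_mul (fa_diff a b) c = fa_diff (fa_mul a c) (fa_mul b c)"
  unfolding fa_mul_def fa_diff_def by (simp add: algebra_simps sum_subtractf)
lemma fm_diff_r: "fa_mul c (fa_diff a b) = fa_diff (fa_mul c a) (fa_mul c b)"
  unfolding fa_mul_def fa_diff_def by (simp add: algebra_simps sum_subtractf)
lemma fm_neg_l: "fa_mul (\<lambda>u. - a u) c = (\<lambda>w. - fa_mul a c w)"
  unfolding fa_mul_def by (simp add: sum_negf)
lemma fm_sum_l: "fa_mul (fa_sum A F) c = fa_sum A (\<lambda>b. fa_mul (F b) c)"
  unfolding fa_mul_def fa_sum_def by (simp add: sum_distrib_right fun_eq_iff) (intro allI sum.swap)
lemma fm_sum_r: "fa_mul c (fa_sum A F) = fa_sum A (\<lambda>b. fa_mul c (F b))"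
  unfolding fa_mul_def fa_sum_def by (simp add: sum_distrib_left fun_eq_iff) (intro allI sum.swap)

lemma fin_mon[simp]: "fa_fin (fa_mon w)" unfolding fa_fin_def fa_mon_def by simp
lemma fin_zero[simp]: "fa_fin fa_zero" unfolding fa_fin_def fa_zero_def by simp
lemma fin_add: "fa_fin a \<Longrightarrow> fa_fin b \<Longrightarrow> fa_fin (fa_add a b)"
  unfolding fa_fin_def fa_add_def by (rule finite_subset[of _ "{w. a w \<noteq> 0} \<union> {w. b w \<noteq> 0}"]) (auto simp del: Collect_disj_eq)
lemma fin_neg: "fa_fin a \<Longrightarrow> fa_fin (\<lambda>u. - a u)"
  unfolding fa_fin_def by simp
lemma fin_sum: "finite A \<Longrightarrow> (\<And>b. b \<in> A \<Longrightarrow> fa_fin (F b)) \<Longrightarrow> fa_fin (fa_sum A F)"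
proof (induction A rule: finite_induct)
  case empty then show ?case by (simp add: fa_fin_def fa_sum_def)
next
  case (insert x A)
  have "fa_sum (insert x A) F = fa_add (F x) (fa_sum A F)"
    using insert by (simp add: fa_sum_def fa_add_def fun_eq_iff)
  then show ?case using insert fin_add[of "F x" "fa_sum A F"] by simp
qed
lemma fin_mul: assumes "fa_fin a" "fa_fin b" shows "fa_fin (fa_mul a b)"
proof -
  have "{w. fa_mul a b w \<noteq> 0} \<subseteq> (\<lambda>(u,v). u @ v) ` ({u. a u \<noteq> 0} \<times> {v. b v \<noteq> 0})"
  proof
    fix w assume "w \<in> {w. fa_mul a b w \<noteq> 0}"
    then have "(\<Sum>i\<le>length w. a (take i w) * b (drop i w)) \<noteq> 0" unfolding fa_mul_def by simp
    then have "\<exists>i. a (take i w) * b (drop i w) \<noteq> 0" by (metis (no_types, lifting) sum.neutral)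
    then obtain i where "a (take i w) * b (drop i w) \<noteq> 0" by blast
    then have "a (take i w) \<noteq> 0" "b (drop i w) \<noteq> 0" by auto
    then show "w \<in> (\<lambda>(u,v). u @ v) ` ({u. a u \<noteq> 0} \<times> {v. b v \<noteq> 0})"
      by (intro image_eqI[of _ _ "(take i w, drop i w)"]) auto
  qed
  moreover have "finite ((\<lambda>(u,v). u @ v) ` ({u. a u \<noteq> 0} \<times> {v. b v \<noteq> 0}))"
    using assms unfolding fa_fin_def by (intro finite_imageI finite_cartesian_product)
  ultimately show ?thesis unfolding fa_fin_def by (rule finite_subset)
qed

section \<open>ideal\<close>

lemma id_mul_l: "x \<in> kp_ideal L \<Longrightarrow> fa_fin c \<Longrightarrow> fa_mul c x \<in> kp_ideal L"
proof (induction x rule: kp_ideal.induct)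
  case kp_ideal_zero then show ?case by (simp add: fm_fzero_r kp_ideal.kp_ideal_zero)
next
  case (kp_ideal_gen r a b)
  have e: "fa_mul c (fa_mul (fa_mul a r) b) = fa_mul (fa_mul (fa_mul c a) r) b" by (simp add: fm_assoc)
  have f: "fa_fin (fa_mul c a)" by (rule fin_mul[OF kp_ideal_gen.prems kp_ideal_gen.hyps(2)])
  show ?case unfolding e by (rule kp_ideal.kp_ideal_gen[OF kp_ideal_gen.hyps(1) f kp_ideal_gen.hyps(3)])
next
  case (kp_ideal_add x y) then show ?case by (simp add: fm_add_r kp_ideal.kp_ideal_add)
qed

lemma id_mul_r: "x \<in> kp_ideal L \<Longrightarrow> fa_fin c \<Longrightarrow> fa_mul x c \<in> kp_ideal L"
proof (induction x rule: kp_ideal.induct)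
  case kp_ideal_zero then show ?case by (simp add: fm_fzero_l kp_ideal.kp_ideal_zero)
next
  case (kp_ideal_gen r a b)
  have e: "fa_mul (fa_mul (fa_mul a r) b) c = fa_mul (fa_mul a r) (fa_mul b c)" by (simp add: fm_assoc)
  have f: "fa_fin (fa_mul b c)" by (rule fin_mul[OF kp_ideal_gen.hyps(3) kp_ideal_gen.prems])
  show ?case unfolding e by (rule kp_ideal.kp_ideal_gen[OF kp_ideal_gen.hyps(1,2) f])
next
  case (kp_ideal_add x y) then show ?case by (simp add: fm_add_l kp_ideal.kp_ideal_add)
qed

lemma id_neg: fixes x :: "('v,'a,'r::comm_ring_1) fa" assumes "x \<in> kp_ideal L" shows "(\<lambda>u. - x u) \<in> kp_ideal L"
proof -
  have "fa_fin (\<lambda>u. - (fa_mon [] u :: 'r))" by (simp add: fin_neg)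
  from id_mul_l[OF assms this] show ?thesis by (simp add: fm_neg_l fm_unit_l)
qed

lemma id_rel: "r \<in> kp_rels L \<Longrightarrow> r \<in> kp_ideal L"
  using kp_ideal.kp_ideal_gen[of r L "fa_mon []" "fa_mon []"] by (simp add: fm_unit_l fm_unit_r)

lemma keq_refl: "kp_eq L a a"
  unfolding kp_eq_def fa_diff_def using kp_ideal.kp_ideal_zero unfolding fa_zero_def by simp

lemma keq_sym: "kp_eq L a b \<Longrightarrow> kp_eq L b a"
  unfolding kp_eq_def using id_neg[of "fa_diff a b" L] by (simp add: fa_diff_def)

lemma keq_trans: "kp_eq L a b \<Longrightarrow> kp_eq L b c \<Longrightarrow> kp_eq L a c"
  unfolding kp_eq_def using kp_ideal.kp_ideal_add[of "fa_diff a b" L "fa_diff b c"]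
  by (simp add: fa_diff_def fa_add_def)

lemma keq_cl: "kp_eq L a b \<Longrightarrow> fa_fin c \<Longrightarrow> kp_eq L (fa_mul c a) (fa_mul c b)"
  unfolding kp_eq_def fm_diff_r[symmetric] by (rule id_mul_l)
lemma keq_cr: "kp_eq L a b \<Longrightarrow> fa_fin c \<Longrightarrow> kp_eq L (fa_mul a c) (fa_mul b c)"
  unfolding kp_eq_def fm_diff_l[symmetric] by (rule id_mul_r)

lemma keq_rel: "fa_diff a b \<in> kp_rels L \<Longrightarrow> kp_eq L a b"
  unfolding kp_eq_def by (rule id_rel)

lemma id_sum: "finite A \<Longrightarrow> (\<And>b. b \<in> A \<Longrightarrow> H b \<in> kp_ideal L) \<Longrightarrow> fa_sum A H \<in> kp_ideal L"
proof (induction A rule: finite_induct)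
  case empty then show ?case using kp_ideal.kp_ideal_zero by (simp add: fa_sum_def fa_zero_def)
next
  case (insert x A)
  have "fa_sum (insert x A) H = fa_add (H x) (fa_sum A H)"
    using insert by (simp add: fa_sum_def fa_add_def fun_eq_iff)
  then show ?case using insert kp_ideal.kp_ideal_add[of "H x" L "fa_sum A H"] by simp
qed

lemma keq_sum: "finite A \<Longrightarrow> (\<And>b. b \<in> A \<Longrightarrow> kp_eq L (F b) (G b)) \<Longrightarrow> kp_eq L (fa_sum A F) (fa_sum A G)"
proof -
  assume "finite A" "\<And>b. b \<in> A \<Longrightarrow> kp_eq L (F b) (G b)"
  then have "fa_sum A (\<lambda>b. fa_diff (F b) (G b)) \<in> kp_ideal L" unfolding kp_eq_def by (rule id_sum)
  moreover have "fa_sum A (\<lambda>b. fa_diff (F b) (G b)) = fa_diff (fa_sum A F) (fa_sum A G)"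
    by (simp add: fa_sum_def fa_diff_def sum_subtractf)
  ultimately show ?thesis unfolding kp_eq_def by simp
qed

lemma keq_step: "kp_eq L (fa_mul a b) c \<Longrightarrow> fa_fin Y \<Longrightarrow> kp_eq L (fa_mul a (fa_mul b Y)) (fa_mul c Y)"
  using keq_cr[of L "fa_mul a b" c Y] by (simp add: fm_assoc)

lemma keq_mul: "kp_eq L a a' \<Longrightarrow> kp_eq L b b' \<Longrightarrow> fa_fin b \<Longrightarrow> fa_fin a' \<Longrightarrow> kp_eq L (fa_mul a b) (fa_mul a' b')"
  using keq_trans[OF keq_cr keq_cl] by blast

lemma keq_zero_r: "kp_eq L a fa_zero \<Longrightarrow> fa_fin c \<Longrightarrow> kp_eq L (fa_mul a c) fa_zero"
  using keq_cr[of L a fa_zero c] by (simp add: fm_fzero_l)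
lemma keq_zero_l: "kp_eq L a fa_zero \<Longrightarrow> fa_fin c \<Longrightarrow> kp_eq L (fa_mul c a) fa_zero"
  using keq_cl[of L a fa_zero c] by (simp add: fm_fzero_r)

lemma fin_s[simp]: "fa_fin (kp_s L l)" unfolding kp_s_def by simp
lemma fin_ss[simp]: "fa_fin (kp_ss L l)" unfolding kp_ss_def by simp
lemma fin_p[simp]: "fa_fin (kp_p L v)" unfolding kp_p_def by simp
lemma fin_mul'[simp]: "fa_fin a \<Longrightarrow> fa_fin b \<Longrightarrow> fa_fin (fa_mul a b)" by (rule fin_mul)

lemma s0: "dg L l = 0 \<Longrightarrow> kp_s L l = kp_p L (rg L l)" unfolding kp_s_def kp_p_def by simp
lemma ss0: "dg L l = 0 \<Longrightarrow> kp_ss L l = kp_p L (rg L l)" unfolding kp_ss_def kp_p_def by simp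

lemma R1: "v \<in> Obj L \<Longrightarrow> w \<in> Obj L \<Longrightarrow> kp_eq L (fa_mul (kp_p L v) (kp_p L w)) (if v = w then kp_p L v else fa_zero)"
  by (rule keq_rel, unfold kp_rels_def, rule UnI1, rule UnI1, rule UnI1, rule UnI1, rule UnI1, rule UnI1, rule UnI1, rule UnI1) blast
lemma R2: "l \<in> Mor L \<Longrightarrow> m \<in> Mor L \<Longrightarrow> rg L m = sr L l \<Longrightarrow> dg L l \<noteq> 0 \<Longrightarrow> dg L m \<noteq> 0 \<Longrightarrow> kp_eq L (fa_mul (kp_s L l) (kp_s L m)) (kp_s L (cmp L l m))"
  by (rule keq_rel, unfold kp_rels_def, rule UnI1, rule UnI1, rule UnI1, rule UnI1, rule UnI1, rule UnI1, rule UnI1, rule UnI2) blast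
lemma R3: "l \<in> Mor L \<Longrightarrow> m \<in> Mor L \<Longrightarrow> rg L m = sr L l \<Longrightarrow> dg L l \<noteq> 0 \<Longrightarrow> dg L m \<noteq> 0 \<Longrightarrow> kp_eq L (fa_mul (kp_ss L m) (kp_ss L l)) (kp_ss L (cmp L l m))"
  by (rule keq_rel, unfold kp_rels_def, rule UnI1, rule UnI1, rule UnI1, rule UnI1, rule UnI1, rule UnI1, rule UnI2) blast
lemma R4: "l \<in> Mor L \<Longrightarrow> dg L l \<noteq> 0 \<Longrightarrow> kp_eq L (fa_mul (kp_p L (rg L l)) (kp_s L l)) (kp_s L l)"
  by (rule keq_rel, unfold kp_rels_def, rule UnI1, rule UnI1, rule UnI1, rule UnI1, rule UnI1, rule UnI2) blast
lemma R5: "l \<in> Mor L \<Longrightarrow> dg L l \<noteq> 0 \<Longrightarrow> kp_eq L (fa_mul (kp_s L l) (kp_p L (sr L l))) (kp_s L l)"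
  by (rule keq_rel, unfold kp_rels_def, rule UnI1, rule UnI1, rule UnI1, rule UnI1, rule UnI2) blast
lemma R6: "l \<in> Mor L \<Longrightarrow> dg L l \<noteq> 0 \<Longrightarrow> kp_eq L (fa_mul (kp_p L (sr L l)) (kp_ss L l)) (kp_ss L l)"
  by (rule keq_rel, unfold kp_rels_def, rule UnI1, rule UnI1, rule UnI1, rule UnI2) blast
lemma R7: "l \<in> Mor L \<Longrightarrow> dg L l \<noteq> 0 \<Longrightarrow> kp_eq L (fa_mul (kp_ss L l) (kp_p L (rg L l))) (kp_ss L l)"
  by (rule keq_rel, unfold kp_rels_def, rule UnI1, rule UnI1, rule UnI2) blast
lemma R8: "l \<in> Mor L \<Longrightarrow> m \<in> Mor L \<Longrightarrow> dg L l = dg L m \<Longrightarrow> dg L l \<noteq> 0 \<Longrightarrow> kp_eq L (fa_mul (kp_ss L l) (kp_s L m)) (if l = m then kp_p L (sr L l) else fa_zero)"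
  by (rule keq_rel, unfold kp_rels_def, rule UnI1, rule UnI2) blast
lemma R9: "v \<in> Obj L \<Longrightarrow> n \<noteq> 0 \<Longrightarrow> kp_eq L (kp_p L v) (fa_sum (vLn L v n) (\<lambda>l. fa_mul (kp_s L l) (kp_ss L l)))"
  by (rule keq_rel, unfold kp_rels_def, rule UnI2) blast

context kgl begin

lemma d0: assumes "l \<in> Mor L" "dg L l = 0" shows "sr L l = rg L l" "l = idt L (rg L l)"
proof -
  show "l = idt L (rg L l)" using kg_deg0[OF assms] .
  then show "sr L l = rg L l" using kg_idt[of "rg L l"] kg_mor[OF assms(1)] by metis
qed

lemma d0_idl: assumes "l \<in> Mor L" "dg L l = 0" "m \<in> Mor L" "sr L l = rg L m" shows "cmp L l m = m"
proof -
  have "l = idt L (rg L m)" using d0[OF assms(1,2)] assms(4) by metis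
  then show ?thesis using kg_idl[OF assms(3)] by simp
qed

lemma d0_idr: assumes "m \<in> Mor L" "dg L m = 0" "l \<in> Mor L" "sr L l = rg L m" shows "cmp L l m = l"
proof -
  have "m = idt L (sr L l)" using d0[OF assms(1,2)] assms(4) by metis
  then show ?thesis using kg_idr[OF assms(3)] by simp
qed

lemma Rpp: "v \<in> Obj L \<Longrightarrow> kp_eq L (fa_mul (kp_p L v) (kp_p L v)) (kp_p L v)"
  using R1[where v=v and w=v] by simp

lemma K1: assumes "l \<in> Mor L" "m \<in> Mor L" "sr L l = rg L m"
  shows "kp_eq L (fa_mul (kp_s L l) (kp_s L m)) (kp_s L (cmp L l m))"
proof (cases "dg L l = 0")
  case True
  have c: "cmp L l m = m" by (rule d0_idl[OF assms(1) True assms(2,3)])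
  have rl: "rg L l = rg L m" using d0(1)[OF assms(1) True] assms(3) by simp
  have sl: "kp_s L l = kp_p L (rg L m)" using s0[OF True] rl by simp
  have o: "rg L m \<in> Obj L" using kg_mor[OF assms(2)] by simp
  show ?thesis
  proof (cases "dg L m = 0")
    case True
    show ?thesis unfolding c sl s0[OF True] by (rule Rpp[OF o])
  next
    case False
    show ?thesis unfolding c sl by (rule R4[OF assms(2) False])
  qed
next
  case False
  show ?thesis
  proof (cases "dg L m = 0")
    case True
    have c: "cmp L l m = l" by (rule d0_idr[OF assms(2) True assms(1,3)])
    have sm: "kp_s L m = kp_p L (sr L l)" using s0[OF True] assms(3) by simp
    show ?thesis unfolding c sm by (rule R5[OF assms(1) False])
  next
    case F2: False
    show ?thesis using R2[OF assms(1,2) assms(3)[symmetric] False F2] .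
  qed
qed

lemma K2: assumes "l \<in> Mor L" "m \<in> Mor L" "sr L l = rg L m"
  shows "kp_eq L (fa_mul (kp_ss L m) (kp_ss L l)) (kp_ss L (cmp L l m))"
proof (cases "dg L l = 0")
  case True
  have c: "cmp L l m = m" by (rule d0_idl[OF assms(1) True assms(2,3)])
  have rl: "rg L l = rg L m" using d0(1)[OF assms(1) True] assms(3) by simp
  have sl: "kp_ss L l = kp_p L (rg L m)" using ss0[OF True] rl by simp
  have o: "rg L m \<in> Obj L" using kg_mor[OF assms(2)] by simp
  show ?thesis
  proof (cases "dg L m = 0")
    case True
    show ?thesis unfolding c sl ss0[OF True] by (rule Rpp[OF o])
  next
    case False
    show ?thesis unfolding c sl by (rule R7[OF assms(2) False])
  qed
next
  case False
  show ?thesis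
  proof (cases "dg L m = 0")
    case True
    have c: "cmp L l m = l" by (rule d0_idr[OF assms(2) True assms(1,3)])
    have sm: "kp_ss L m = kp_p L (sr L l)" using ss0[OF True] assms(3) by simp
    show ?thesis unfolding c sm by (rule R6[OF assms(1) False])
  next
    case F2: False
    show ?thesis using R3[OF assms(1,2) assms(3)[symmetric] False F2] .
  qed
qed

lemma K3: assumes "l \<in> Mor L" shows "kp_eq L (fa_mul (kp_ss L l) (kp_s L l)) (kp_p L (sr L l))"
proof (cases "dg L l = 0")
  case True
  have o: "rg L l \<in> Obj L" using kg_mor[OF assms] by simp
  show ?thesis unfolding s0[OF True] ss0[OF True] d0(1)[OF assms True] by (rule Rpp[OF o])
next
  case False
  show ?thesis using R8[OF assms assms refl False] by simp
qed

lemma K3z: assumes "l \<in> Mor L" "m \<in> Mor L" "dg L l = dg L m" "l \<noteq> m"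
  shows "kp_eq L (fa_mul (kp_ss L l) (kp_s L m)) fa_zero"
proof (cases "dg L l = 0")
  case True
  have T2: "dg L m = 0" using True assms by simp
  have "rg L l \<noteq> rg L m" using d0(2)[OF assms(1) True] d0(2)[OF assms(2) T2] assms(4) by metis
  moreover have "rg L l \<in> Obj L" "rg L m \<in> Obj L" using kg_mor assms by auto
  ultimately show ?thesis unfolding s0[OF T2] ss0[OF True] using R1[where v="rg L l" and w="rg L m"] by simp
next
  case False
  show ?thesis using R8[OF assms(1,2,3) False] assms(4) by simp
qed

lemma K4a: assumes "l \<in> Mor L" shows "kp_eq L (fa_mul (kp_s L l) (kp_p L (sr L l))) (kp_s L l)"
proof (cases "dg L l = 0")
  case True
  have o: "rg L l \<in> Obj L" using kg_mor[OF assms] by simp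
  show ?thesis unfolding s0[OF True] d0(1)[OF assms True] by (rule Rpp[OF o])
next
  case False
  show ?thesis using R5[OF assms False] .
qed

lemma K4b: assumes "l \<in> Mor L" shows "kp_eq L (fa_mul (kp_ss L l) (kp_p L (rg L l))) (kp_ss L l)"
proof (cases "dg L l = 0")
  case True
  have o: "rg L l \<in> Obj L" using kg_mor[OF assms] by simp
  show ?thesis unfolding ss0[OF True] by (rule Rpp[OF o])
next
  case False
  show ?thesis using R7[OF assms False] .
qed

lemma K4c: assumes "l \<in> Mor L" shows "kp_eq L (fa_mul (kp_p L (rg L l)) (kp_s L l)) (kp_s L l)"
proof (cases "dg L l = 0")
  case True
  have o: "rg L l \<in> Obj L" using kg_mor[OF assms] by simp
  show ?thesis unfolding s0[OF True] by (rule Rpp[OF o])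
next
  case False
  show ?thesis using R4[OF assms False] .
qed

lemma G1: assumes "l \<in> Mor L" "m \<in> Mor L" "sr L l = rg L m"
  shows "kp_eq L (fa_mul (kp_ss L (cmp L l m)) (kp_s L l)) (kp_ss L m)"
proof -
  have a: "kp_eq L (fa_mul (kp_ss L (cmp L l m)) (kp_s L l)) (fa_mul (fa_mul (kp_ss L m) (kp_ss L l)) (kp_s L l))"
    using keq_cr[OF keq_sym[OF K2[OF assms]], of "kp_s L l"] by simp
  have b: "kp_eq L (fa_mul (kp_ss L m) (fa_mul (kp_ss L l) (kp_s L l))) (fa_mul (kp_ss L m) (kp_p L (rg L m)))"
    using keq_cl[OF K3[OF assms(1)], of "kp_ss L m"] assms(3) by simp
  show ?thesis using keq_trans[OF a] keq_trans[OF b K4b[OF assms(2)]] by (simp add: fm_assoc)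
qed

lemma G2: assumes "l \<in> Mor L" "m \<in> Mor L" "sr L l = rg L m"
  shows "kp_eq L (fa_mul (kp_ss L l) (kp_s L (cmp L l m))) (kp_s L m)"
proof -
  have a: "kp_eq L (fa_mul (kp_ss L l) (kp_s L (cmp L l m))) (fa_mul (kp_ss L l) (fa_mul (kp_s L l) (kp_s L m)))"
    using keq_cl[OF keq_sym[OF K1[OF assms]], of "kp_ss L l"] by simp
  have b: "kp_eq L (fa_mul (fa_mul (kp_ss L l) (kp_s L l)) (kp_s L m)) (fa_mul (kp_p L (rg L m)) (kp_s L m))"
    using keq_cr[OF K3[OF assms(1)], of "kp_s L m"] assms(3) by simp
  show ?thesis using keq_trans[OF a] keq_trans[OF b K4c[OF assms(2)]] by (simp add: fm_assoc)
qed

end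

lemma fa_sum_reindex: "inj_on f V \<Longrightarrow> fa_sum (f ` V) G = fa_sum V (\<lambda>x. G (f x))"
  unfolding fa_sum_def by (simp add: sum.reindex)

lemma fa_sum_cong: "(\<And>x. x \<in> V \<Longrightarrow> F x = G x) \<Longrightarrow> fa_sum V F = fa_sum V G"
  unfolding fa_sum_def by simp

context kgr begin

lemma EXP: assumes l: "l \<in> Mor L" and n: "n \<noteq> 0"
  shows "kp_eq L (fa_mul (kp_s L l) (kp_ss L l))
           (fa_sum (cmp L l ` vLn L (sr L l) n) (\<lambda>r. fa_mul (kp_s L r) (kp_ss L r)))"
proof -
  define V where "V = vLn L (sr L l) n"
  have o: "sr L l \<in> Obj L" using kg_mor[OF l] by simp
  have fV: "finite V" using RF o unfolding row_finite_no_sources_def V_def by auto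
  have a: "kp_eq L (fa_mul (kp_s L l) (kp_ss L l)) (fa_mul (fa_mul (kp_s L l) (kp_p L (sr L l))) (kp_ss L l))"
    by (rule keq_cr[OF keq_sym[OF K4a[OF l]]]) simp
  have b: "kp_eq L (fa_mul (fa_mul (kp_s L l) (kp_p L (sr L l))) (kp_ss L l))
      (fa_mul (fa_mul (kp_s L l) (fa_sum V (\<lambda>t. fa_mul (kp_s L t) (kp_ss L t)))) (kp_ss L l))"
    unfolding V_def by (rule keq_cr[OF keq_cl[OF R9[OF o n]]]) simp_all
  have c: "fa_mul (fa_mul (kp_s L l) (fa_sum V (\<lambda>t. fa_mul (kp_s L t) (kp_ss L t)))) (kp_ss L l)
      = fa_sum V (\<lambda>t. fa_mul (fa_mul (kp_s L l) (kp_s L t)) (fa_mul (kp_ss L t) (kp_ss L l)))"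
    unfolding fm_sum_r fm_sum_l by (rule fa_sum_cong) (simp add: fm_assoc)
  have d: "kp_eq L (fa_sum V (\<lambda>t. fa_mul (fa_mul (kp_s L l) (kp_s L t)) (fa_mul (kp_ss L t) (kp_ss L l))))
       (fa_sum V (\<lambda>t. fa_mul (kp_s L (cmp L l t)) (kp_ss L (cmp L l t))))"
  proof (rule keq_sum[OF fV])
    fix t assume "t \<in> V"
    then have t: "t \<in> Mor L" "sr L l = rg L t" unfolding V_def vLn_def by auto
    show "kp_eq L (fa_mul (fa_mul (kp_s L l) (kp_s L t)) (fa_mul (kp_ss L t) (kp_ss L l)))
          (fa_mul (kp_s L (cmp L l t)) (kp_ss L (cmp L l t)))"
      by (rule keq_mul[OF K1[OF l t] K2[OF l t]]) simp_all
  qed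
  have inj: "inj_on (cmp L l) V"
  proof
    fix t t' assume "t \<in> V" "t' \<in> V" "cmp L l t = cmp L l t'"
    then have tt: "t \<in> Mor L" "t' \<in> Mor L" "sr L l = rg L t" "sr L l = rg L t'" "cmp L l t = cmp L l t'"
      unfolding V_def vLn_def by auto
    show "t = t'" using kg_fact_eq[OF l tt(1) l tt(2) tt(3) tt(4) tt(5) refl] by simp
  qed
  have e: "fa_sum (cmp L l ` V) (\<lambda>r. fa_mul (kp_s L r) (kp_ss L r))
     = fa_sum V (\<lambda>t. fa_mul (kp_s L (cmp L l t)) (kp_ss L (cmp L l t)))"
    by (rule fa_sum_reindex[OF inj])
  have "kp_eq L (fa_mul (kp_s L l) (kp_ss L l)) (fa_sum V (\<lambda>t. fa_mul (fa_mul (kp_s L l) (kp_s L t)) (fa_mul (kp_ss L t) (kp_ss L l))))"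
    using keq_trans[OF a b] unfolding c .
  then have "kp_eq L (fa_mul (kp_s L l) (kp_ss L l)) (fa_sum V (\<lambda>t. fa_mul (kp_s L (cmp L l t)) (kp_ss L (cmp L l t))))"
    by (rule keq_trans[OF _ d])
  then show ?thesis unfolding V_def[symmetric] e .
qed

lemma SETEQ: assumes l: "l \<in> Mor L" and D: "dg L l \<le> D"
  shows "cmp L l ` vLn L (sr L l) (D - dg L l) = {r \<in> Mor L. dg L r = D \<and> cyl L r \<subseteq> cyl L l}"
proof
  show "cmp L l ` vLn L (sr L l) (D - dg L l) \<subseteq> {r \<in> Mor L. dg L r = D \<and> cyl L r \<subseteq> cyl L l}"
  proof
    fix r assume "r \<in> cmp L l ` vLn L (sr L l) (D - dg L l)"
    then obtain t where t: "t \<in> Mor L" "rg L t = sr L l" "dg L t = D - dg L l" "r = cmp L l t"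
      unfolding vLn_def by auto
    have c: "cmp L l t \<in> Mor L" "dg L (cmp L l t) = dg L l + dg L t" using kg_cmp[OF l t(1) t(2)[symmetric]] by auto
    have "cyl L r \<subseteq> cyl L l"
    proof
      fix y assume "y \<in> cyl L r"
      then have "y \<in> cyl L (cmp L l t)" using t(4) by simp
      from conjunct1[OF cyl_pre[OF this l t(1) t(2)[symmetric]]] show "y \<in> cyl L l" .
    qed
    then show "r \<in> {r \<in> Mor L. dg L r = D \<and> cyl L r \<subseteq> cyl L l}" using c t D by (simp add: d_add_diff)
  qed
next
  show "{r \<in> Mor L. dg L r = D \<and> cyl L r \<subseteq> cyl L l} \<subseteq> cmp L l ` vLn L (sr L l) (D - dg L l)"
  proof
    fix r assume "r \<in> {r \<in> Mor L. dg L r = D \<and> cyl L r \<subseteq> cyl L l}"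
    then have r: "r \<in> Mor L" "dg L r = D" "cyl L r \<subseteq> cyl L l" by auto
    obtain y where y: "y \<in> inf_paths L" "y 0 (dg L r) = r" using path_exists[OF r(1)] by blast
    have "y \<in> cyl L r" unfolding cyl_def using y by simp
    then have "y \<in> cyl L l" using r(3) by (rule subsetD[rotated])
    then have yl: "y 0 (dg L l) = l" unfolding cyl_def by simp
    have le: "0 \<le> dg L l" by (simp add: le_fun_def)
    note Y = ip_cmp[OF y(1) le D]
    have tm: "y (dg L l) D \<in> Mor L" "dg L (y (dg L l) D) = D - dg L l" using ip_mor[OF y(1) D] by auto
    have "r = cmp L l (y (dg L l) D)" using Y y r yl by simp
    moreover have "y (dg L l) D \<in> vLn L (sr L l) (D - dg L l)" using tm Y yl unfolding vLn_def by simp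
    ultimately show "r \<in> cmp L l ` vLn L (sr L l) (D - dg L l)" by blast
  qed
qed

lemma CYLEQ: assumes l: "l \<in> Mor L" and l': "l' \<in> Mor L" and C: "cyl L l = cyl L l'"
  shows "kp_eq L (fa_mul (kp_s L l) (kp_ss L l)) (fa_mul (kp_s L l') (kp_ss L l'))"
proof -
  define D where "D = sup (dg L l) (dg L l') + 1"
  have D1: "dg L l \<le> D" "dg L l' \<le> D" unfolding D_def by (auto simp: le_fun_def sup_nat_def)
  have n1: "D - dg L l \<noteq> 0"
  proof
    assume "D - dg L l = 0"
    then have "(D - dg L l) undefined = 0" by simp
    then show False unfolding D_def by (simp add: sup_nat_def)
  qed
  have n2: "D - dg L l' \<noteq> 0"
  proof
    assume "D - dg L l' = 0"
    then have "(D - dg L l') undefined = 0" by simp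
    then show False unfolding D_def by (simp add: sup_nat_def)
  qed
  have "cmp L l ` vLn L (sr L l) (D - dg L l) = cmp L l' ` vLn L (sr L l') (D - dg L l')"
    using SETEQ[OF l D1(1)] SETEQ[OF l' D1(2)] C by simp
  note E1 = EXP[OF l n1, unfolded this]
  show ?thesis by (rule keq_trans[OF E1 keq_sym[OF EXP[OF l' n2]]])
qed

end

context kgl begin

lemma cyl_sub: assumes "x \<in> inf_paths L" "m \<le> n" shows "cyl L (x 0 n) \<subseteq> cyl L (x 0 m)"
proof
  fix y assume y: "y \<in> cyl L (x 0 n)"
  have "y 0 m = x 0 m" by (rule cyl_mono[OF assms(1) y assms(2)])
  moreover have "dg L (x 0 m) = m" using ip_mor[OF assms(1), of 0 m] by (simp add: le_fun_def)
  moreover have "y \<in> inf_paths L" using y unfolding cyl_def by simp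
  ultimately show "y \<in> cyl L (x 0 m)" unfolding cyl_def by simp
qed

lemma TOP: "generate_topology_on {cyl L \<mu> | \<mu>. \<mu> \<in> Mor L} T \<Longrightarrow> x \<in> T \<Longrightarrow> x \<in> inf_paths L \<Longrightarrow>
   \<exists>n. cyl L (x 0 n) \<subseteq> T"
proof (induction T rule: generate_topology_on.induct)
  case Empty then show ?case by simp
next
  case (Int a b)
  obtain n1 where n1: "cyl L (x 0 n1) \<subseteq> a" using Int.IH(1) Int.prems by blast
  obtain n2 where n2: "cyl L (x 0 n2) \<subseteq> b" using Int.IH(2) Int.prems by blast
  note n = n1 n2
  have "cyl L (x 0 (sup n1 n2)) \<subseteq> cyl L (x 0 n1)" "cyl L (x 0 (sup n1 n2)) \<subseteq> cyl L (x 0 n2)"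
    by (rule cyl_sub[OF Int.prems(2) sup_ge1], rule cyl_sub[OF Int.prems(2) sup_ge2])
  then show ?case using n by blast
next
  case (UN K)
  then obtain k where "k \<in> K" "x \<in> k" by blast
  then obtain n where "cyl L (x 0 n) \<subseteq> k" using UN.IH UN.prems by blast
  then show ?case using \<open>k \<in> K\<close> by blast
next
  case (Basis s)
  then obtain \<mu> where "s = cyl L \<mu>" by blast
  then have "\<mu> = x 0 (dg L \<mu>)" using Basis.prems unfolding cyl_def by simp
  then have "cyl L (x 0 (dg L \<mu>)) \<subseteq> s" using \<open>s = cyl L \<mu>\<close> by simp
  then show ?case by blast
qed

lemma INT: assumes "x \<in> regular_paths L" "(\<alpha>,\<beta>) \<in> KSigma L" "x \<in> Fset L \<alpha> \<beta>"
  shows "\<exists>n. cyl L (x 0 n) \<subseteq> Fset L \<alpha> \<beta>"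
proof -
  let ?X = "path_top L"
  have xi: "x \<in> inf_paths L" using assms(1) unfolding regular_paths_def by simp
  have nf: "x \<notin> ?X frontier_of Fset L \<alpha> \<beta>" using assms(1,2) unfolding regular_paths_def by blast
  have am: "\<alpha> \<in> Mor L" using assms(2) unfolding KSigma_def by simp
  have "Fset L \<alpha> \<beta> \<subseteq> cyl L \<alpha>" unfolding Fset_def by auto
  then have "Fset L \<alpha> \<beta> \<subseteq> topspace ?X" unfolding path_top_def using am by auto
  then have "x \<in> ?X closure_of Fset L \<alpha> \<beta>" using closure_of_subset assms(3) by blast
  then have "x \<in> ?X interior_of Fset L \<alpha> \<beta>" using nf unfolding frontier_of_def by blast
  then obtain T where T: "openin ?X T" "x \<in> T" "T \<subseteq> Fset L \<alpha> \<beta>" unfolding interior_of_def by blast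
  have "generate_topology_on {cyl L \<mu> | \<mu>. \<mu> \<in> Mor L} T"
    using T(1) unfolding path_top_def by (simp add: openin_topology_generated_by_iff)
  from TOP[OF this T(2) xi] show ?thesis using T(3) by blast
qed

lemma Fsym: "Fset L a b = Fset L b a" unfolding Fset_def by auto

lemma transfer:
  fixes N :: "'k \<Rightarrow> nat"
  assumes x: "x \<in> Fset L a b" and ab: "a \<in> Mor L" "b \<in> Mor L"
    and sub: "cyl L (x 0 n0) \<subseteq> Fset L a b" and n0: "n0 \<le> N + dg L a"
    and g: "g \<in> Mor L" "rg L g = sr L (x 0 (N + dg L a))"
    and y: "y \<in> cyl L (cmp L (x 0 (N + dg L a)) g)"
  shows "y \<in> cyl L (cmp L (x 0 (N + dg L b)) g)"
proof -
  let ?a = "dg L a" and ?b = "dg L b" and ?g = "dg L g"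
  have xi: "x \<in> inf_paths L" "x 0 ?a = a" "x 0 ?b = b" "pshift x ?a = pshift x ?b"
    using x unfolding Fset_def cyl_def by auto
  have le0: "0 \<le> ?a" "?a \<le> N + ?a" "0 \<le> ?b" "?b \<le> N + ?b" "0 \<le> N + ?a" "0 \<le> N + ?b"
    by (auto simp: le_fun_def)
  have xa: "x 0 (N + ?a) \<in> Mor L" "dg L (x 0 (N + ?a)) = N + ?a" using ip_mor[OF xi(1) le0(5)] by auto
  have xb: "x 0 (N + ?b) \<in> Mor L" "dg L (x 0 (N + ?b)) = N + ?b" using ip_mor[OF xi(1) le0(6)] by auto
  have ga: "x ?a (N + ?a) = x ?b (N + ?b)"
  proof -
    have "pshift x ?a 0 N = pshift x ?b 0 N" using xi(4) by simp
    then show ?thesis unfolding pshift_def by (simp add: le_fun_def add.commute)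
  qed
  from cyl_pre[OF y xa(1) g(1) g(2)[symmetric]]
  have y1: "y \<in> cyl L (x 0 (N + ?a))" "y (N + ?a) (N + ?a + ?g) = g" using xa by auto
  have yi: "y \<in> inf_paths L" using y1 unfolding cyl_def by simp
  have "y \<in> cyl L (x 0 n0)" using cyl_sub[OF xi(1) n0] y1(1) by blast
  then have yF: "y \<in> Fset L a b" using sub by blast
  then have yab: "y 0 ?a = a" "y 0 ?b = b" "pshift y ?a = pshift y ?b" unfolding Fset_def cyl_def by auto
  have y0a: "y 0 (N + ?a) = x 0 (N + ?a)" using y1(1) xa unfolding cyl_def by simp
  note XA = ip_cmp[OF xi(1) le0(1,2)]
  note YA = ip_cmp[OF yi le0(1,2)]
  have m1: "x ?a (N + ?a) \<in> Mor L" "y ?a (N + ?a) \<in> Mor L" "a \<in> Mor L"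
    using ip_mor[OF xi(1) le0(2)] ip_mor[OF yi le0(2)] ab by auto
  have "cmp L a (y ?a (N + ?a)) = cmp L a (x ?a (N + ?a))" using XA YA y0a xi(2) yab(1) by simp
  then have yg: "y ?a (N + ?a) = x ?a (N + ?a)"
    using kg_fact_eq[OF m1(3) m1(2) m1(3) m1(1)] XA YA xi(2) yab(1) by metis
  have yb: "y ?b (N + ?b) = y ?a (N + ?a)"
  proof -
    have "pshift y ?a 0 N = pshift y ?b 0 N" using yab(3) by simp
    then show ?thesis unfolding pshift_def by (simp add: le_fun_def add.commute)
  qed
  note YB = ip_cmp[OF yi le0(3,4)]
  note XB = ip_cmp[OF xi(1) le0(3,4)]
  have y0b: "y 0 (N + ?b) = x 0 (N + ?b)" using YB XB yb yg ga yab(2) xi(3) by simp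
  have yg2: "y (N + ?b) (N + ?b + ?g) = g"
  proof -
    have "pshift y ?a N (N + ?g) = pshift y ?b N (N + ?g)" using yab(3) by simp
    then have "y (N + ?a) (N + ?g + ?a) = y (N + ?b) (N + ?g + ?b)" unfolding pshift_def by (simp add: le_fun_def)
    then show ?thesis using y1(2) by (simp add: ac_simps)
  qed
  have le1: "0 \<le> N + ?b" "N + ?b \<le> N + ?b + ?g" by (auto simp: le_fun_def)
  note YC = ip_cmp[OF yi le1]
  have c: "dg L (cmp L (x 0 (N + ?b)) g) = N + ?b + ?g"
  proof -
    have "rg L g = sr L (x 0 (N + ?b))"
      using g(2) XA XB ga xi(2,3) kg_cmp[OF ab(1) m1(1)] kg_cmp ab ip_mor[OF xi(1) le0(4)] ip_mor[OF xi(1) le0(2)]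
      by (metis (no_types, lifting))
    then show ?thesis using kg_cmp[OF xb(1) g(1)] xb by simp
  qed
  have "y 0 (N + ?b + ?g) = cmp L (x 0 (N + ?b)) g" using YC y0b yg2 by simp
  then show ?thesis using yi c unfolding cyl_def by simp
qed

end

lemma zero_mid: "kp_eq L (fa_mul a b) fa_zero \<Longrightarrow> fa_fin Y \<Longrightarrow> fa_fin c \<Longrightarrow>
   kp_eq L (fa_mul c (fa_mul a (fa_mul b Y))) fa_zero"
  using keq_zero_l[OF keq_step[of L a b fa_zero Y, unfolded fm_fzero_l]] by simp

theorem lemma5p3:
  fixes L :: "('v,'a,'k::finite) kgraph"
    and \<alpha> \<beta> :: 'a
    and x :: "('a,'k) ipath"
  assumes "kgraph L"
    and "row_finite_no_sources L"
    and "(\<alpha>, \<beta>) \<in> KSigma L"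
    and "x \<in> regular_paths L"
  shows "(x \<notin> Fset L \<alpha> \<beta> \<longrightarrow>
           (\<exists>\<mu>\<in>Mor L. \<exists>\<nu>\<in>Mor L. x \<in> cyl L \<mu> \<inter> cyl L \<nu> \<and>
              kp_eq L (fa_prod [kp_s L \<mu>, kp_ss L \<mu>, kp_s L \<alpha>, kp_ss L \<beta>, kp_s L \<nu>, kp_ss L \<nu>])
                      (fa_zero :: ('v,'a,'r::comm_ring_1) fa)))
       \<and> (x \<in> Fset L \<alpha> \<beta> \<longrightarrow>
           (\<exists>\<gamma>\<in>Mor L. rg L \<gamma> = sr L \<alpha> \<and>
              x \<in> cyl L (cmp L \<alpha> \<gamma>) \<inter> cyl L (cmp L \<beta> \<gamma>) \<and>
              kp_eq L (fa_prod [kp_s L (cmp L \<alpha> \<gamma>), kp_ss L (cmp L \<alpha> \<gamma>), kp_s L \<alpha>, kp_ss L \<beta>,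
                                kp_s L (cmp L \<beta> \<gamma>), kp_ss L (cmp L \<beta> \<gamma>)])
                      (fa_mul (kp_s L (cmp L \<alpha> \<gamma>)) (kp_ss L (cmp L \<beta> \<gamma>)) :: ('v,'a,'r) fa) \<and>
              cycline L TYPE('r) (cmp L \<alpha> \<gamma>) (cmp L \<beta> \<gamma>)))"
proof -
  interpret kgr L using assms(1,2) unfolding kgr_def kgr_axioms_def kgl_def by simp
  have ab: "\<alpha> \<in> Mor L" "\<beta> \<in> Mor L" "sr L \<alpha> = sr L \<beta>" "\<alpha> \<noteq> \<beta>" using assms(3) unfolding KSigma_def by auto
  have xi: "x \<in> inf_paths L" using assms(4) unfolding regular_paths_def by simp
  have P: "fa_prod [a1,a2,a3,a4,a5,a6] = fa_mul a1 (fa_mul a2 (fa_mul a3 (fa_mul a4 (fa_mul a5 a6))))"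
    for a1 a2 a3 a4 a5 a6 :: "('v,'a,'r) fa" by (simp add: fa_prod_def fm_unit_r)
  let ?a = "dg L \<alpha>" and ?b = "dg L \<beta>"
  show ?thesis
  proof (intro conjI impI)
    assume nF: "x \<notin> Fset L \<alpha> \<beta>"
    show "\<exists>\<mu>\<in>Mor L. \<exists>\<nu>\<in>Mor L. x \<in> cyl L \<mu> \<inter> cyl L \<nu> \<and>
              kp_eq L (fa_prod [kp_s L \<mu>, kp_ss L \<mu>, kp_s L \<alpha>, kp_ss L \<beta>, kp_s L \<nu>, kp_ss L \<nu>])
                      (fa_zero :: ('v,'a,'r::comm_ring_1) fa)"
    proof (cases "x \<in> cyl L \<alpha>")
      case False
      define \<mu> where "\<mu> = x 0 ?a"
      have le: "0 \<le> ?a" by (simp add: le_fun_def)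
      have m: "\<mu> \<in> Mor L" "dg L \<mu> = ?a" using ip_mor[OF xi le] unfolding \<mu>_def by auto
      have ne: "\<mu> \<noteq> \<alpha>" using False xi unfolding \<mu>_def cyl_def by auto
      have z: "kp_eq L (fa_mul (kp_ss L \<mu>) (kp_s L \<alpha>)) (fa_zero :: ('v,'a,'r) fa)" by (rule K3z[OF m(1) ab(1) m(2) ne])
      have "kp_eq L (fa_prod [kp_s L \<mu>, kp_ss L \<mu>, kp_s L \<alpha>, kp_ss L \<beta>, kp_s L \<mu>, kp_ss L \<mu>]) (fa_zero :: ('v,'a,'r) fa)"
        unfolding P by (rule zero_mid[OF z]) simp_all
      moreover have "x \<in> cyl L \<mu>" unfolding \<mu>_def by (rule ip_cyl[OF xi])
      ultimately show ?thesis using m(1) by blast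
    next
      case ca: True
      show ?thesis
      proof (cases "x \<in> cyl L \<beta>")
        case False
        define \<mu> where "\<mu> = x 0 ?b"
        have le: "0 \<le> ?b" by (simp add: le_fun_def)
        have m: "\<mu> \<in> Mor L" "dg L \<mu> = ?b" using ip_mor[OF xi le] unfolding \<mu>_def by auto
        have ne: "\<beta> \<noteq> \<mu>" using False xi unfolding \<mu>_def cyl_def by auto
        have z: "kp_eq L (fa_mul (kp_ss L \<beta>) (kp_s L \<mu>)) (fa_zero :: ('v,'a,'r) fa)" by (rule K3z[OF ab(2) m(1) m(2)[symmetric] ne])
        have z2: "kp_eq L (fa_mul (kp_s L \<alpha>) (fa_mul (kp_ss L \<beta>) (fa_mul (kp_s L \<mu>) (kp_ss L \<mu>)))) (fa_zero :: ('v,'a,'r) fa)"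
          by (rule zero_mid[OF z]) simp_all
        have "kp_eq L (fa_prod [kp_s L \<mu>, kp_ss L \<mu>, kp_s L \<alpha>, kp_ss L \<beta>, kp_s L \<mu>, kp_ss L \<mu>]) (fa_zero :: ('v,'a,'r) fa)"
          unfolding P by (rule keq_zero_l[OF keq_zero_l[OF z2]]) simp_all
        moreover have "x \<in> cyl L \<mu>" unfolding \<mu>_def by (rule ip_cyl[OF xi])
        ultimately show ?thesis using m(1) by blast
      next
        case cb: True
        have ne: "pshift x ?a \<noteq> pshift x ?b" using nF ca cb unfolding Fset_def by auto
        then have "\<exists>m n. pshift x ?a m n \<noteq> pshift x ?b m n" by (auto simp: fun_eq_iff)
        then obtain m n where mn0: "pshift x ?a m n \<noteq> pshift x ?b m n" by blast
        have mn: "m \<le> n" using mn0 unfolding pshift_def by (cases "m \<le> n") auto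
        with mn0 have dif: "x (m + ?a) (n + ?a) \<noteq> x (m + ?b) (n + ?b)" unfolding pshift_def by simp
        define N where "N = n + 1"
        have N0: "N \<noteq> 0"
        proof
          assume "N = 0" then have "N undefined = 0" by simp
          then show False unfolding N_def by simp
        qed
        have lea: "0 \<le> ?a" "?a \<le> m + ?a" "m + ?a \<le> n + ?a" "n + ?a \<le> N + ?a" "?a \<le> N + ?a" "?a \<le> n + ?a"
          using mn by (auto simp: le_fun_def N_def)
        have leb: "0 \<le> ?b" "?b \<le> m + ?b" "m + ?b \<le> n + ?b" "n + ?b \<le> N + ?b" "?b \<le> N + ?b" "?b \<le> n + ?b"
          using mn by (auto simp: le_fun_def N_def)
        define \<mu>' where "\<mu>' = x ?a (N + ?a)"
        define \<nu>' where "\<nu>' = x ?b (N + ?b)"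
        have m': "\<mu>' \<in> Mor L" "dg L \<mu>' = N" using ip_mor[OF xi lea(5)] unfolding \<mu>'_def by (auto simp: fun_eq_iff)
        have n': "\<nu>' \<in> Mor L" "dg L \<nu>' = N" using ip_mor[OF xi leb(5)] unfolding \<nu>'_def by (auto simp: fun_eq_iff)
        have xa: "x 0 ?a = \<alpha>" using ca unfolding cyl_def by simp
        have xb: "x 0 ?b = \<beta>" using cb unfolding cyl_def by simp
        have mu: "sr L \<alpha> = rg L \<mu>'" "x 0 (N + ?a) = cmp L \<alpha> \<mu>'"
          using ip_cmp[OF xi lea(1) lea(5)] xa unfolding \<mu>'_def by auto
        have nu: "sr L \<beta> = rg L \<nu>'" "x 0 (N + ?b) = cmp L \<beta> \<nu>'"
          using ip_cmp[OF xi leb(1) leb(5)] xb unfolding \<nu>'_def by auto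
        have mne: "\<mu>' \<noteq> \<nu>'"
        proof
          assume eq: "\<mu>' = \<nu>'"
          note A1 = ip_cmp[OF xi lea(6) lea(4)]
          note B1 = ip_cmp[OF xi leb(6) leb(4)]
          have ma: "x ?a (n + ?a) \<in> Mor L" "dg L (x ?a (n + ?a)) = n" "x (n + ?a) (N + ?a) \<in> Mor L"
            using ip_mor[OF xi lea(6)] ip_mor[OF xi lea(4)] by (auto simp: fun_eq_iff)
          have mb: "x ?b (n + ?b) \<in> Mor L" "dg L (x ?b (n + ?b)) = n" "x (n + ?b) (N + ?b) \<in> Mor L"
            using ip_mor[OF xi leb(6)] ip_mor[OF xi leb(4)] by (auto simp: fun_eq_iff)
          have e1: "x ?a (n + ?a) = x ?b (n + ?b)"
            using kg_fact_eq[OF ma(1) ma(3) mb(1) mb(3)] A1 B1 eq ma(2) mb(2) unfolding \<mu>'_def \<nu>'_def by metis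
          note A2 = ip_cmp[OF xi lea(2) lea(3)]
          note B2 = ip_cmp[OF xi leb(2) leb(3)]
          have ma2: "x ?a (m + ?a) \<in> Mor L" "dg L (x ?a (m + ?a)) = m" "x (m + ?a) (n + ?a) \<in> Mor L"
            using ip_mor[OF xi lea(2)] ip_mor[OF xi lea(3)] by (auto simp: fun_eq_iff)
          have mb2: "x ?b (m + ?b) \<in> Mor L" "dg L (x ?b (m + ?b)) = m" "x (m + ?b) (n + ?b) \<in> Mor L"
            using ip_mor[OF xi leb(2)] ip_mor[OF xi leb(3)] by (auto simp: fun_eq_iff)
          have "x (m + ?a) (n + ?a) = x (m + ?b) (n + ?b)"
            using kg_fact_eq[OF ma2(1) ma2(3) mb2(1) mb2(3)] A2 B2 e1 ma2(2) mb2(2) by metis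
          then show False using dif by simp
        qed
        have fZ: "fa_fin (fa_mul (kp_ss L \<beta>) (fa_mul (kp_s L (cmp L \<beta> \<nu>')) (kp_ss L (cmp L \<beta> \<nu>'))))" by simp
        have E1: "kp_eq L (fa_mul (kp_ss L (cmp L \<alpha> \<mu>')) (fa_mul (kp_s L \<alpha>) (fa_mul (kp_ss L \<beta>) (fa_mul (kp_s L (cmp L \<beta> \<nu>')) (kp_ss L (cmp L \<beta> \<nu>'))))))
            (fa_mul (kp_ss L \<mu>') (fa_mul (kp_ss L \<beta>) (fa_mul (kp_s L (cmp L \<beta> \<nu>')) (kp_ss L (cmp L \<beta> \<nu>')))) :: ('v,'a,'r) fa)"
          by (rule keq_step[OF G1[OF ab(1) m'(1) mu(1)] fZ])
        have E2: "kp_eq L (fa_mul (kp_ss L \<beta>) (fa_mul (kp_s L (cmp L \<beta> \<nu>')) (kp_ss L (cmp L \<beta> \<nu>'))))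
            (fa_mul (kp_s L \<nu>') (kp_ss L (cmp L \<beta> \<nu>')) :: ('v,'a,'r) fa)"
          by (rule keq_step[OF G2[OF ab(2) n'(1) nu(1)]]) simp
        have E3: "kp_eq L (fa_mul (kp_ss L \<mu>') (fa_mul (kp_s L \<nu>') (kp_ss L (cmp L \<beta> \<nu>')))) (fa_zero :: ('v,'a,'r) fa)"
          using keq_step[OF K3z[OF m'(1) n'(1) _ mne], of "kp_ss L (cmp L \<beta> \<nu>')"] m'(2) n'(2)
          by (simp add: fm_fzero_l)
        have E23: "kp_eq L (fa_mul (kp_ss L \<mu>') (fa_mul (kp_ss L \<beta>) (fa_mul (kp_s L (cmp L \<beta> \<nu>')) (kp_ss L (cmp L \<beta> \<nu>'))))) (fa_zero :: ('v,'a,'r) fa)"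
          by (rule keq_trans[OF keq_cl[OF E2] E3]) simp
        have "kp_eq L (fa_prod [kp_s L (cmp L \<alpha> \<mu>'), kp_ss L (cmp L \<alpha> \<mu>'), kp_s L \<alpha>, kp_ss L \<beta>, kp_s L (cmp L \<beta> \<nu>'), kp_ss L (cmp L \<beta> \<nu>')])
              (fa_zero :: ('v,'a,'r) fa)"
          unfolding P by (rule keq_zero_l[OF keq_trans[OF E1 E23]]) simp
        moreover have "x \<in> cyl L (cmp L \<alpha> \<mu>')" "x \<in> cyl L (cmp L \<beta> \<nu>')"
          using ip_cyl[OF xi, of "N + ?a"] ip_cyl[OF xi, of "N + ?b"] mu(2) nu(2) by simp_all
        moreover have "cmp L \<alpha> \<mu>' \<in> Mor L" "cmp L \<beta> \<nu>' \<in> Mor L"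
          using kg_cmp[OF ab(1) m'(1) mu(1)] kg_cmp[OF ab(2) n'(1) nu(1)] by auto
        ultimately show ?thesis by blast
      qed
    qed
  next
    assume F: "x \<in> Fset L \<alpha> \<beta>"
    show "\<exists>\<gamma>\<in>Mor L. rg L \<gamma> = sr L \<alpha> \<and>
              x \<in> cyl L (cmp L \<alpha> \<gamma>) \<inter> cyl L (cmp L \<beta> \<gamma>) \<and>
              kp_eq L (fa_prod [kp_s L (cmp L \<alpha> \<gamma>), kp_ss L (cmp L \<alpha> \<gamma>), kp_s L \<alpha>, kp_ss L \<beta>,
                                kp_s L (cmp L \<beta> \<gamma>), kp_ss L (cmp L \<beta> \<gamma>)])
                      (fa_mul (kp_s L (cmp L \<alpha> \<gamma>)) (kp_ss L (cmp L \<beta> \<gamma>)) :: ('v,'a,'r) fa) \<and>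
              cycline L TYPE('r) (cmp L \<alpha> \<gamma>) (cmp L \<beta> \<gamma>)"
    proof -
      obtain n0 where sub: "cyl L (x 0 n0) \<subseteq> Fset L \<alpha> \<beta>" using INT[OF assms(4,3) F] by blast
      define N where "N = n0 + 1"
      have n0a: "n0 \<le> N + ?a" and n0b: "n0 \<le> N + ?b" unfolding N_def by (auto simp: le_fun_def)
      have xs: "x 0 ?a = \<alpha>" "x 0 ?b = \<beta>" "pshift x ?a = pshift x ?b"
        using F unfolding Fset_def cyl_def by auto
      have lea: "0 \<le> ?a" "?a \<le> N + ?a" "0 \<le> ?b" "?b \<le> N + ?b" by (auto simp: le_fun_def)
      define \<gamma> where "\<gamma> = x ?a (N + ?a)"
      have gb: "\<gamma> = x ?b (N + ?b)"
      proof -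
        have "pshift x ?a 0 N = pshift x ?b 0 N" using xs(3) by simp
        then show ?thesis unfolding pshift_def \<gamma>_def by (simp add: le_fun_def add.commute)
      qed
      have g: "\<gamma> \<in> Mor L" using ip_mor[OF xi lea(2)] unfolding \<gamma>_def by simp
      have ga: "sr L \<alpha> = rg L \<gamma>" "x 0 (N + ?a) = cmp L \<alpha> \<gamma>"
        using ip_cmp[OF xi lea(1,2)] xs(1) unfolding \<gamma>_def by auto
      have gbb: "sr L \<beta> = rg L \<gamma>" "x 0 (N + ?b) = cmp L \<beta> \<gamma>"
        using ip_cmp[OF xi lea(3,4)] xs(2) gb by auto
      have ag: "cmp L \<alpha> \<gamma> \<in> Mor L" "sr L (cmp L \<alpha> \<gamma>) = sr L \<gamma>" using kg_cmp[OF ab(1) g ga(1)] by auto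
      have bg: "cmp L \<beta> \<gamma> \<in> Mor L" "sr L (cmp L \<beta> \<gamma>) = sr L \<gamma>" using kg_cmp[OF ab(2) g gbb(1)] by auto
      have cyls: "x \<in> cyl L (cmp L \<alpha> \<gamma>) \<inter> cyl L (cmp L \<beta> \<gamma>)"
        using ip_cyl[OF xi, of "N + ?a"] ip_cyl[OF xi, of "N + ?b"] ga(2) gbb(2) by simp
      let ?Y = "kp_ss L (cmp L \<beta> \<gamma>)"
      have E1: "kp_eq L (fa_mul (kp_ss L (cmp L \<alpha> \<gamma>)) (fa_mul (kp_s L \<alpha>) (fa_mul (kp_ss L \<beta>) (fa_mul (kp_s L (cmp L \<beta> \<gamma>)) ?Y))))
           (fa_mul (kp_ss L \<gamma>) (fa_mul (kp_ss L \<beta>) (fa_mul (kp_s L (cmp L \<beta> \<gamma>)) ?Y)) :: ('v,'a,'r) fa)"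
        by (rule keq_step[OF G1[OF ab(1) g ga(1)]]) simp
      have E2: "kp_eq L (fa_mul (kp_ss L \<beta>) (fa_mul (kp_s L (cmp L \<beta> \<gamma>)) ?Y)) (fa_mul (kp_s L \<gamma>) ?Y :: ('v,'a,'r) fa)"
        by (rule keq_step[OF G2[OF ab(2) g gbb(1)]]) simp
      have E3: "kp_eq L (fa_mul (kp_ss L \<gamma>) (fa_mul (kp_s L \<gamma>) ?Y)) (fa_mul (kp_p L (sr L \<gamma>)) ?Y :: ('v,'a,'r) fa)"
        by (rule keq_step[OF K3[OF g]]) simp
      have E4: "kp_eq L (fa_mul (kp_s L (cmp L \<alpha> \<gamma>)) (fa_mul (kp_p L (sr L \<gamma>)) ?Y)) (fa_mul (kp_s L (cmp L \<alpha> \<gamma>)) ?Y :: ('v,'a,'r) fa)"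
        using keq_step[OF K4a[OF ag(1)], of ?Y] ag(2) by simp
      have EQ: "kp_eq L (fa_prod [kp_s L (cmp L \<alpha> \<gamma>), kp_ss L (cmp L \<alpha> \<gamma>), kp_s L \<alpha>, kp_ss L \<beta>,
                                kp_s L (cmp L \<beta> \<gamma>), kp_ss L (cmp L \<beta> \<gamma>)])
                      (fa_mul (kp_s L (cmp L \<alpha> \<gamma>)) (kp_ss L (cmp L \<beta> \<gamma>)) :: ('v,'a,'r) fa)"
        unfolding P
        apply (rule keq_trans[OF keq_cl[OF E1]], simp)
        apply (rule keq_trans[OF keq_cl[OF keq_cl[OF E2]]], simp, simp)
        apply (rule keq_trans[OF keq_cl[OF E3]], simp)
        by (rule E4)
      have CY: "cycline L TYPE('r) (cmp L \<alpha> \<gamma>) (cmp L \<beta> \<gamma>)"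
        unfolding cycline_def
      proof (intro conjI ballI impI)
        show "sr L (cmp L \<alpha> \<gamma>) = sr L (cmp L \<beta> \<gamma>)" using ag bg by simp
        fix g' assume g': "g' \<in> Mor L" "rg L g' = sr L (cmp L \<alpha> \<gamma>)"
        have g'b: "rg L g' = sr L (cmp L \<beta> \<gamma>)" using g' ag bg by simp
        have m1: "cmp L (cmp L \<alpha> \<gamma>) g' \<in> Mor L" using kg_cmp[OF ag(1) g'(1) g'(2)[symmetric]] by simp
        have m2: "cmp L (cmp L \<beta> \<gamma>) g' \<in> Mor L" using kg_cmp[OF bg(1) g'(1) g'b[symmetric]] by simp
        have F2: "x \<in> Fset L \<beta> \<alpha>" using F Fsym by simp
        have sub2: "cyl L (x 0 n0) \<subseteq> Fset L \<beta> \<alpha>" using sub Fsym by simp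
        have "cyl L (cmp L (cmp L \<alpha> \<gamma>) g') = cyl L (cmp L (cmp L \<beta> \<gamma>) g')"
        proof
          show "cyl L (cmp L (cmp L \<alpha> \<gamma>) g') \<subseteq> cyl L (cmp L (cmp L \<beta> \<gamma>) g')"
          proof
            fix y assume "y \<in> cyl L (cmp L (cmp L \<alpha> \<gamma>) g')"
            then have y: "y \<in> cyl L (cmp L (x 0 (N + ?a)) g')" using ga(2) by simp
            have pre: "rg L g' = sr L (x 0 (N + ?a))" using g'(2) ga(2) by simp
            have "y \<in> cyl L (cmp L (x 0 (N + ?b)) g')" by (rule transfer[OF F ab(1,2) sub n0a g'(1) pre y])
            then show "y \<in> cyl L (cmp L (cmp L \<beta> \<gamma>) g')" using gbb(2) by simp
          qed
        next
          show "cyl L (cmp L (cmp L \<beta> \<gamma>) g') \<subseteq> cyl L (cmp L (cmp L \<alpha> \<gamma>) g')"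
          proof
            fix y assume "y \<in> cyl L (cmp L (cmp L \<beta> \<gamma>) g')"
            then have y: "y \<in> cyl L (cmp L (x 0 (N + ?b)) g')" using gbb(2) by simp
            have pre: "rg L g' = sr L (x 0 (N + ?b))" using g'b gbb(2) by simp
            have "y \<in> cyl L (cmp L (x 0 (N + ?a)) g')" by (rule transfer[OF F2 ab(2,1) sub2 n0b g'(1) pre y])
            then show "y \<in> cyl L (cmp L (cmp L \<alpha> \<gamma>) g')" using ga(2) by simp
          qed
        qed
        from CYLEQ[OF m1 m2 this]
        show "kp_eq L (fa_mul (kp_s L (cmp L (cmp L \<alpha> \<gamma>) g')) (kp_ss L (cmp L (cmp L \<alpha> \<gamma>) g')))
                (fa_mul (kp_s L (cmp L (cmp L \<beta> \<gamma>) g')) (kp_ss L (cmp L (cmp L \<beta> \<gamma>) g')) :: ('v,'a,'r) fa)" .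
      qed
      show ?thesis using g ga(1) cyls EQ CY by auto
    qed
  qed
qed

end
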